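(* For $j=1,2$ let $u_{0,j}\in H^1(\mathbb R)$ and let $\mu_{0,j}$ be a nonnegative finite Radon measure on $\mathbb R$ whose absolutely continuous part is $u_{0,j}'^2\,dx$; put $C_j=\mu_{0,j}(\mathbb R)$ and $F_{0,j}(x)=\mu_{0,j}((-\infty,x))$. Assume $$\int_{-\infty}^0F_{0,j}(x)\,dx+\int_0^\infty\big(C_j-F_{0,j}(x)\big)\,dx<\infty,\qquad j=1,2.$$ Let $(u_j(t),\mu_j(t))$ be the conservative solution of the Hunter--Saxton equation with initial data $(u_{0,j},\mu_{0,j})$, and for $t\ge0$, $\eta\in(0,C_j]$ let $$\chi_j(t,\eta)=\sup\{x\mid \mu_j(t)((-\infty,x))<\eta\},\qquad \mathcal U_j(t,\eta)=u_j(t,\chi_j(t,\eta)).$$ Define $$d\big((u_1(t),\mu_1(t)),(u_2(t),\mu_2(t))\big)=\|\mathcal U_1(t,C_1\,\cdot)-\mathcal U_2(t,C_2\,\cdot)\|_{L^\infty([0,1])}+\|\chi_1(t,C_1\,\cdot)-\chi_2(t,C_2\,\cdot)\|_{L^1([0,1])}+|C_1-C_2|.$$ Then for all $t\ge0$, $$d\big((u_1(t),\mu_1(t)),(u_2(t),\mu_2(t))\big)\le\Big(1+t+\frac18t^2\Big)\,d\big((u_{0,1},\mu_{0,1}),(u_{0,2},\mu_{0,2})\big).$$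
   Context: The (integrated, augmented) Hunter--Saxton system is $u_t+uu_x=\frac14\int_{-\infty}^x d\mu-\frac14\int_x^\infty d\mu$, $\mu_t+(u\mu)_x=0$. Its conservative solution with initial data $(u_0,\mu_0)$ (with $C=\mu_0(\mathbb R)$) is defined as follows. Let $F_0(x)=\mu_0((-\infty,x))$ and define $\bar y_0(\xi)=\sup\{x\mid x+F_0(x)<\xi\}$, $\bar U_0(\xi)=u_0(\bar y_0(\xi))$, $\bar H_0(\xi)=\xi-\bar y_0(\xi)$ for $\xi\in\mathbb R$. For $t\ge0$ set $\bar y(t,\xi)=\frac14(\bar H_0(\xi)-\frac12C)t^2+\bar U_0(\xi)t+\bar y_0(\xi)$, $\bar U(t,\xi)=\frac12(\bar H_0(\xi)-\frac12C)t+\bar U_0(\xi)$, $\bar H(t,\xi)=\bar H_0(\xi)$. Then $\xi\mapsto\bar y(t,\xi)$ is nondecreasing and onto $\mathbb R$, and the conservative solution is $u(t,x)=\bar U(t,\xi)$ for any $\xi$ with $\bar y(t,\xi)=x$, and $\mu(t)=\bar y(t,\cdot)_\#(\bar H_\xi\,d\xi)$ (push-forward measure). In particular $\mu(t)(\mathbb R)=C$ for all $t$. *)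

theory Defs
  imports "HOL-Analysis.Analysis" "HOL-Probability.Essential_Supremum"
begin

text \<open>u in H^1(R) (continuous representative) with weak derivative u':
  u, u' Borel measurable and square integrable, u absolutely continuous with
  u b - u a = integral of u' over [a,b].\<close>
definition H1_with_deriv :: "(real \<Rightarrow> real) \<Rightarrow> (real \<Rightarrow> real) \<Rightarrow> bool" where
  "H1_with_deriv u u' \<longleftrightarrow>
     u \<in> borel_measurable borel \<and> u' \<in> borel_measurable borel \<and>
     integrable lborel (\<lambda>x. (u x)\<^sup>2) \<and> integrable lborel (\<lambda>x. (u' x)\<^sup>2) \<and>
     (\<forall>a b. a \<le> b \<longrightarrow> (u' has_integral (u b - u a)) {a..b})"

text \<open>Nonnegative finite Radon (= finite Borel) measure on R.\<close>
definition finite_borel_measure :: "real measure \<Rightarrow> bool" where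
  "finite_borel_measure \<mu> \<longleftrightarrow> sets \<mu> = sets borel \<and> finite_measure \<mu>"

text \<open>The absolutely continuous part (Lebesgue decomposition w.r.t. dx) of \<mu>
  is g dx: outside a Borel Lebesgue-null set N (carrying the singular part)
  \<mu> coincides with g dx.\<close>
definition ac_part_density :: "real measure \<Rightarrow> (real \<Rightarrow> real) \<Rightarrow> bool" where
  "ac_part_density \<mu> g \<longleftrightarrow>
     (\<exists>N \<in> sets borel. emeasure lborel N = 0 \<and>
        (\<forall>A \<in> sets borel. emeasure \<mu> (A - N) = (\<integral>\<^sup>+ x\<in>A. ennreal (g x) \<partial>lborel)))"

definition F0 :: "real measure \<Rightarrow> real \<Rightarrow> real" where
  "F0 \<mu> x = measure \<mu> {..<x}"

definition Ctot :: "real measure \<Rightarrow> real" where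
  "Ctot \<mu> = measure \<mu> UNIV"

definition ybar0 :: "real measure \<Rightarrow> real \<Rightarrow> real" where
  "ybar0 \<mu> \<xi> = Sup {x. x + F0 \<mu> x < \<xi>}"

definition Ubar0 :: "(real \<Rightarrow> real) \<Rightarrow> real measure \<Rightarrow> real \<Rightarrow> real" where
  "Ubar0 u \<mu> \<xi> = u (ybar0 \<mu> \<xi>)"

definition Hbar0 :: "real measure \<Rightarrow> real \<Rightarrow> real" where
  "Hbar0 \<mu> \<xi> = \<xi> - ybar0 \<mu> \<xi>"

definition ybar :: "(real \<Rightarrow> real) \<Rightarrow> real measure \<Rightarrow> real \<Rightarrow> real \<Rightarrow> real" where
  "ybar u \<mu> t \<xi> = 1/4 * (Hbar0 \<mu> \<xi> - Ctot \<mu> / 2) * t\<^sup>2 + Ubar0 u \<mu> \<xi> * t + ybar0 \<mu> \<xi>"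

definition Ubar :: "(real \<Rightarrow> real) \<Rightarrow> real measure \<Rightarrow> real \<Rightarrow> real \<Rightarrow> real" where
  "Ubar u \<mu> t \<xi> = 1/2 * (Hbar0 \<mu> \<xi> - Ctot \<mu> / 2) * t + Ubar0 u \<mu> \<xi>"

definition HS_u :: "(real \<Rightarrow> real) \<Rightarrow> real measure \<Rightarrow> real \<Rightarrow> real \<Rightarrow> real" where
  "HS_u u \<mu> t x = Ubar u \<mu> t (SOME \<xi>. ybar u \<mu> t \<xi> = x)"

definition HS_mu :: "(real \<Rightarrow> real) \<Rightarrow> real measure \<Rightarrow> real \<Rightarrow> real measure" where
  "HS_mu u \<mu> t = distr (density lborel (\<lambda>\<xi>. ennreal (deriv (Hbar0 \<mu>) \<xi>))) borel (ybar u \<mu> t)"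

definition chi :: "real measure \<Rightarrow> real \<Rightarrow> real" where
  "chi \<mu> \<eta> = Sup {x. measure \<mu> {..<x} < \<eta>}"

definition UU :: "(real \<Rightarrow> real) \<Rightarrow> real measure \<Rightarrow> real \<Rightarrow> real" where
  "UU u \<mu> \<eta> = u (chi \<mu> \<eta>)"

definition dHS :: "(real \<Rightarrow> real) \<Rightarrow> real measure \<Rightarrow> (real \<Rightarrow> real) \<Rightarrow> real measure \<Rightarrow> ereal" where
  "dHS u1 \<mu>1 u2 \<mu>2 =
     esssup (restrict_space lborel {0..1})
        (\<lambda>s. ereal \<bar>UU u1 \<mu>1 (Ctot \<mu>1 * s) - UU u2 \<mu>2 (Ctot \<mu>2 * s)\<bar>)
   + enn2ereal (\<integral>\<^sup>+ s\<in>{0..1}. ennreal \<bar>chi \<mu>1 (Ctot \<mu>1 * s) - chi \<mu>2 (Ctot \<mu>2 * s)\<bar> \<partial>lborel)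
   + ereal \<bar>Ctot \<mu>1 - Ctot \<mu>2\<bar>"

end

theory Submission
  imports Defs "HOL-Analysis.Radon_Nikodym"
begin


lemma lip_cont:
  fixes H :: "real \<Rightarrow> real"
  assumes mono: "\<And>a b. a \<le> b \<Longrightarrow> H a \<le> H b" and lip: "\<And>a b. a \<le> b \<Longrightarrow> H b - H a \<le> b - a"
  shows "continuous_on UNIV H"
proof -
  have "\<bar>H y - H x\<bar> \<le> \<bar>y - x\<bar>" for x y
    using mono[of x y] lip[of x y] mono[of y x] lip[of y x] by (cases "x \<le> y") auto
  then show ?thesis
    unfolding continuous_on_iff dist_real_def
    by (metis UNIV_I le_less_trans)
qed

lemma interval_measure_sum_lborel:
  fixes H :: "real \<Rightarrow> real"
  assumes mono: "\<And>a b. a \<le> b \<Longrightarrow> H a \<le> H b" and lip: "\<And>a b. a \<le> b \<Longrightarrow> H b - H a \<le> b - a"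
    and A: "A \<in> sets borel"
  shows "emeasure (interval_measure H) A + emeasure (interval_measure (\<lambda>x. x - H x)) A = emeasure lborel A"
proof -
  define \<nu> where "\<nu> = interval_measure H"
  define \<kappa> where "\<kappa> = interval_measure (\<lambda>x. x - H x)"
  have cH: "continuous_on UNIV H" by (rule lip_cont[OF mono lip])
  have cK: "continuous_on UNIV (\<lambda>x. x - H x)" by (intro continuous_intros cH)
  have rH: "continuous (at_right a) H" for a
    using cH by (simp add: continuous_on_eq_continuous_at continuous_at_imp_continuous_at_within)
  have rK: "continuous (at_right a) (\<lambda>x. x - H x)" for a
    using cK by (simp add: continuous_on_eq_continuous_at continuous_at_imp_continuous_at_within)
  have mK: "x \<le> y \<Longrightarrow> x - H x \<le> y - H y" for x y using lip[of x y] by simp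
  let ?m = "\<lambda>A. emeasure \<nu> A + emeasure \<kappa> A"
  have sa: "sigma_algebra UNIV (sets borel)"
    by (metis sets.sigma_algebra_axioms space_borel)
  have pos: "positive (sets borel) ?m" by (simp add: positive_def)
  have ca: "countably_additive (sets borel) ?m"
    unfolding countably_additive_def
  proof safe
    fix B :: "nat \<Rightarrow> real set" assume B: "range B \<subseteq> sets borel" "disjoint_family B"
    have "(\<Sum>i. ?m (B i)) = (\<Sum>i. emeasure \<nu> (B i)) + (\<Sum>i. emeasure \<kappa> (B i))"
      by (rule suminf_add[symmetric]) auto
    also have "\<dots> = ?m (\<Union>i. B i)"
      using B by (simp add: suminf_emeasure \<nu>_def \<kappa>_def)
    finally show "(\<Sum>i. ?m (B i)) = ?m (\<Union>i. B i)" .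
  qed
  define \<sigma> where "\<sigma> = measure_of UNIV (sets borel) ?m"
  have em\<sigma>: "emeasure \<sigma> B = ?m B" if "B \<in> sets borel" for B
    unfolding \<sigma>_def by (rule emeasure_measure_of_sigma[OF sa pos ca that])
  have sets\<sigma>: "sets \<sigma> = sets borel"
    unfolding \<sigma>_def by (metis sa sets_measure_of sigma_algebra.sets_measure_of_eq sets.space_closed space_borel)
  let ?E = "range (\<lambda>(a, b). {a <.. b::real})"
  have "lborel = \<sigma>"
  proof (rule measure_eqI_generator_eq_countable[where E="?E" and \<Omega>=UNIV and A="range (\<lambda>n::nat. {- real n <.. real n})"])
    show "Int_stable ?E"
      unfolding Int_stable_def
    proof safe
      fix a b c d :: real
      have "{a<..b} \<inter> {c<..d} = {max a c <.. min b d}" by auto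
      then show "{a<..b} \<inter> {c<..d} \<in> ?E" by auto
    qed
    show "?E \<subseteq> Pow UNIV" by auto
    have sb: "sets (borel::real measure) = sigma_sets UNIV ?E"
    proof -
      have "sets (sigma UNIV ?E) = sigma_sets UNIV ?E" by (rule sets_measure_of) auto
      then show ?thesis by (simp add: borel_sigma_sets_Ioc[symmetric])
    qed
    show "sets lborel = sigma_sets UNIV ?E" "sets \<sigma> = sigma_sets UNIV ?E"
      using sb sets\<sigma> by simp_all
    show "range (\<lambda>n::nat. {- real n <.. real n}) \<subseteq> ?E" by auto
    show "\<Union> (range (\<lambda>n::nat. {- real n <.. real n})) = UNIV"
    proof safe
      fix x :: real
      obtain n :: nat where "\<bar>x\<bar> < n" using reals_Archimedean2 by blast
      then show "x \<in> \<Union> (range (\<lambda>n::nat. {- real n <.. real n}))" by (auto intro!: exI[of _ n])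
    qed auto
    show "countable (range (\<lambda>n::nat. {- real n <.. real n}))" by auto
    show "\<And>a. a \<in> range (\<lambda>n::nat. {- real n <.. real n}) \<Longrightarrow> emeasure lborel a \<noteq> \<infinity>" by auto
    fix X assume "X \<in> ?E"
    then obtain a b where X: "X = {a<..b}" by auto
    show "emeasure lborel X = emeasure \<sigma> X"
    proof (cases "a \<le> b")
      case True
      have "emeasure \<sigma> X = ennreal (H b - H a) + ennreal ((b - H b) - (a - H a))"
        unfolding X using True
        by (simp add: em\<sigma> \<nu>_def \<kappa>_def emeasure_interval_measure_Ioc[OF True mono rH]
            emeasure_interval_measure_Ioc[OF True mK rK])
      also have "\<dots> = ennreal (b - a)"
        using mono[OF True] lip[OF True] by (subst ennreal_plus[symmetric]) auto
      finally show ?thesis using True X by simp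
    next
      case False
      then have "X = {}" using X by auto
      then show ?thesis by (simp add: em\<sigma>)
    qed
  qed
  then show ?thesis using em\<sigma>[OF A] \<nu>_def \<kappa>_def by simp
qed


lemma lip_density:
  fixes H :: "real \<Rightarrow> real"
  assumes mono: "\<And>a b. a \<le> b \<Longrightarrow> H a \<le> H b" and lip: "\<And>a b. a \<le> b \<Longrightarrow> H b - H a \<le> b - a"
  obtains g where "g \<in> borel_measurable borel" "\<And>x. 0 \<le> g x" "\<And>x. g x \<le> 1"
    "\<And>a b. a \<le> b \<Longrightarrow> (\<integral>\<^sup>+x\<in>{a<..b}. ennreal (g x) \<partial>lborel) = ennreal (H b - H a)"
proof -
  interpret lb: sigma_finite_measure "lborel::real measure" by (rule sigma_finite_lborel)
  define \<nu> where "\<nu> = interval_measure H"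
  define \<kappa> where "\<kappa> = interval_measure (\<lambda>x. x - H x)"
  have sum: "emeasure \<nu> A + emeasure \<kappa> A = emeasure lborel A" if "A \<in> sets borel" for A
    unfolding \<nu>_def \<kappa>_def by (rule interval_measure_sum_lborel[OF mono lip that])
  have cH: "continuous_on UNIV H" by (rule lip_cont[OF mono lip])
  have cK: "continuous_on UNIV (\<lambda>x. x - H x)" by (intro continuous_intros cH)
  have rH: "continuous (at_right a) H" for a
    using cH by (simp add: continuous_on_eq_continuous_at continuous_at_imp_continuous_at_within)
  have mK: "x \<le> y \<Longrightarrow> x - H x \<le> y - H y" for x y using lip[of x y] by simp
  have ac\<nu>: "absolutely_continuous (lborel::real measure) \<nu>"
    unfolding absolutely_continuous_def
  proof
    fix N :: "real set" assume N: "N \<in> null_sets lborel"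
    then have Nb: "N \<in> sets borel" by auto
    have "emeasure \<nu> N \<le> emeasure \<nu> N + emeasure \<kappa> N" by simp
    also have "\<dots> = 0" using sum[OF Nb] N by auto
    finally show "N \<in> null_sets \<nu>" using Nb by (auto simp: \<nu>_def null_sets_def)
  qed
  have ac\<kappa>: "absolutely_continuous (lborel::real measure) \<kappa>"
    unfolding absolutely_continuous_def
  proof
    fix N :: "real set" assume N: "N \<in> null_sets lborel"
    then have Nb: "N \<in> sets borel" by auto
    have "emeasure \<kappa> N \<le> emeasure \<nu> N + emeasure \<kappa> N" by simp
    also have "\<dots> = 0" using sum[OF Nb] N by auto
    finally show "N \<in> null_sets \<kappa>" using Nb by (auto simp: \<kappa>_def null_sets_def)
  qed
  define f where "f = RN_deriv (lborel::real measure) \<nu>"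
  have f: "f \<in> borel_measurable lborel" "density lborel f = \<nu>"
    unfolding f_def using sigma_finite_measure.density_RN_deriv[OF sigma_finite_lborel ac\<nu>]
    by (auto simp: \<nu>_def)
  define k where "k = RN_deriv (lborel::real measure) \<kappa>"
  have k: "k \<in> borel_measurable lborel" "density lborel k = \<kappa>"
    unfolding k_def using sigma_finite_measure.density_RN_deriv[OF sigma_finite_lborel ac\<kappa>]
    by (auto simp: \<kappa>_def)
  have "AE x in lborel. f x + k x = 1"
  proof (rule sigma_finite_measure.density_unique2[OF sigma_finite_lborel])
    show "(\<lambda>x. f x + k x) \<in> borel_measurable lborel" using f k by measurable
    show "(\<lambda>x::real. 1::ennreal) \<in> borel_measurable lborel" by simp
    fix A :: "real set" assume A: "A \<in> sets lborel"
    have "(\<integral>\<^sup>+ x \<in> A. (f x + k x) \<partial>lborel) = (\<integral>\<^sup>+ x \<in> A. f x \<partial>lborel) + (\<integral>\<^sup>+ x \<in> A. k x \<partial>lborel)"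
      using f k A by (simp add: distrib_right nn_integral_add)
    also have "\<dots> = emeasure \<nu> A + emeasure \<kappa> A"
      using f k A by (simp add: emeasure_density[symmetric])
    also have "\<dots> = emeasure lborel A" using sum A by simp
    also have "\<dots> = (\<integral>\<^sup>+ x \<in> A. 1 \<partial>lborel)" using A by simp
    finally show "(\<integral>\<^sup>+ x \<in> A. (f x + k x) \<partial>lborel) = (\<integral>\<^sup>+ x \<in> A. 1 \<partial>lborel)" .
  qed
  then have f1: "AE x in lborel. f x \<le> 1"
  proof eventually_elim
    case (elim x)
    have "f x \<le> f x + k x" by (rule add_increasing2[OF zero_le order_refl])
    then show ?case using elim by simp
  qed
  define g where "g x = enn2real (min (f x) 1)" for x
  have gm: "g \<in> borel_measurable borel" unfolding g_def using f by measurable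
  have g0: "0 \<le> g x" for x by (simp add: g_def)
  have g1: "g x \<le> 1" for x
  proof -
    have "enn2real (min (f x) 1) \<le> enn2real 1" by (rule enn2real_mono[OF min.cobounded2]) simp
    then show ?thesis by (simp add: g_def)
  qed
  have fg: "AE x in lborel. ennreal (g x) = f x"
    using f1
  proof eventually_elim
    case (elim x)
    then have "min (f x) 1 = f x" by (simp add: min_absorb1)
    moreover have "f x < top" using elim by (metis ennreal_one_less_top le_less_trans)
    ultimately show ?case by (simp add: g_def)
  qed
  show ?thesis
  proof (rule that[OF gm g0 g1])
    fix a b :: real assume ab: "a \<le> b"
    have "(\<integral>\<^sup>+x\<in>{a<..b}. ennreal (g x) \<partial>lborel) = (\<integral>\<^sup>+x\<in>{a<..b}. f x \<partial>lborel)"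
      by (rule nn_integral_cong_AE) (use fg in eventually_elim, auto)
    also have "\<dots> = emeasure \<nu> {a<..b}" using f by (simp add: emeasure_density[symmetric])
    also have "\<dots> = ennreal (H b - H a)"
      unfolding \<nu>_def by (rule emeasure_interval_measure_Ioc[OF ab mono rH])
    finally show "(\<integral>\<^sup>+x\<in>{a<..b}. ennreal (g x) \<partial>lborel) = ennreal (H b - H a)" .
  qed
qed


lemma ball_real_Ioo: "ball (x::real) h = {x-h<..<x+h}"
  by (auto simp: dist_real_def abs_less_iff)

lemma measure_ball_real: "0 \<le> h \<Longrightarrow> measure lebesgue (ball (x::real) h) = 2*h"
proof -
  assume h: "0 \<le> h"
  have "measure lebesgue (ball x h) = measure lborel {x-h<..<x+h}"
    by (simp add: ball_real_Ioo)
  also have "\<dots> = 2*h" using h by (simp add: measure_def)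
  finally show ?thesis .
qed

lemma borel_sets_lebesgue: "B \<in> sets borel \<Longrightarrow> B \<in> sets lebesgue"
  by (simp add: sets_completionI_sets)

lemma density_negligible:
  fixes A :: "real set" and n m :: nat
  assumes A: "A \<in> sets borel"
  defines "S \<equiv> {x \<in> A \<inter> ball 0 (real n). \<forall>d>0. \<exists>h. 0 < h \<and> h < d \<and>
                      h / real (Suc m) \<le> measure lebesgue (ball x h - A)}"
  shows "negligible S"
  unfolding negligible_outer_le
proof (intro allI impI)
  fix e :: real assume e: "e > 0"
  define \<epsilon> where "\<epsilon> = 1 / real (Suc m)"
  have \<epsilon>: "\<epsilon> > 0" by (simp add: \<epsilon>_def)
  define A' where "A' = A \<inter> ball 0 (real n)"
  have A'b: "A' \<in> sets borel" using A by (simp add: A'_def)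
  obtain W where W: "open W" "A' \<subseteq> W" "emeasure lborel (W - A') < \<epsilon> * e / 2"
    using outer_regular_lborel[OF A'b, of "\<epsilon> * e / 2"] \<epsilon> e by auto
  define W2 where "W2 = W \<inter> ball 0 (real n)"
  have W2: "open W2" "A' \<subseteq> W2" using W by (auto simp: W2_def A'_def)
  have OAb: "W - A' \<in> sets borel" using W A'b by auto
  have OAfin: "W - A' \<in> fmeasurable lebesgue"
    using W(3) OAb by (auto simp: fmeasurable_def emeasure_completion borel_sets_lebesgue intro: order.strict_trans[OF _ ennreal_less_top])
  have mOA: "measure lebesgue (W - A') \<le> \<epsilon> * e / 2"
  proof -
    have "measure lebesgue (W - A') = measure lborel (W - A')" using OAb by simp
    also have "\<dots> \<le> \<epsilon> * e / 2"
      unfolding measure_def using W(3) \<epsilon> e by (intro enn2real_leI) (auto intro: less_imp_le)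
    finally show ?thesis .
  qed
  have SA': "S \<subseteq> A'" by (auto simp: S_def A'_def)
  define K where "K = {(x,h). x \<in> S \<and> 0 < h \<and> ball x h \<subseteq> W2 \<and> \<epsilon> * h \<le> measure lebesgue (ball x h - A)}"
  obtain C where C: "countable C" "C \<subseteq> K"
    and pw: "pairwise (\<lambda>i j. disjnt (ball (fst i) (snd i)) (ball (fst j) (snd j))) C"
    and negC: "negligible (S - (\<Union>i\<in>C. ball (fst i) (snd i)))"
  proof (rule Vitali_covering_theorem_balls[of S K fst snd])
    fix x and d :: real
    assume x: "x \<in> S" and d: "d > 0"
    then have "x \<in> W2" using SA' W2 by auto
    then obtain r where r: "r > 0" "ball x r \<subseteq> W2" using W2(1) openE by blast
    from x have "\<forall>d>0. \<exists>h. 0 < h \<and> h < d \<and> h / real (Suc m) \<le> measure lebesgue (ball x h - A)"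
      by (simp add: S_def)
    then obtain h where h: "0 < h" "h < min d r" "h / real (Suc m) \<le> measure lebesgue (ball x h - A)"
      using d r by (meson min_less_iff_conj)
    have "ball x h \<subseteq> W2" using r h by (meson min_less_iff_conj order_trans subset_ball less_imp_le)
    moreover have "\<epsilon> * h \<le> measure lebesgue (ball x h - A)" using h by (simp add: \<epsilon>_def)
    ultimately have "(x,h) \<in> K" using x h by (simp add: K_def)
    then show "\<exists>i. i \<in> K \<and> x \<in> ball (fst i) (snd i) \<and> snd i < d"
      using h by (intro exI[of _ "(x,h)"]) auto
  qed
  let ?B = "\<lambda>i. ball (fst i) (snd i)"
  have Kprop: "0 < snd i" "?B i \<subseteq> W2" "\<epsilon> * snd i \<le> measure lebesgue (?B i - A)" if "i \<in> C" for i
  proof -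
    have "i \<in> K" using that C(2) by auto
    then show "0 < snd i" "?B i \<subseteq> W2" "\<epsilon> * snd i \<le> measure lebesgue (?B i - A)"
      by (cases i, simp add: K_def)+
  qed
  have BA: "?B i - A \<subseteq> W - A'" if "i \<in> C" for i
    using Kprop(2)[OF that] by (auto simp: W2_def A'_def)
  have Bm: "?B i \<in> lmeasurable" for i by simp
  have BAm: "?B i - A \<in> lmeasurable" for i
    using A by (intro fmeasurable_Diff) (auto simp: borel_sets_lebesgue)
  have bound: "measure lebesgue (\<Union>i\<in>I. ?B i) \<le> e" if I: "I \<subseteq> C" "finite I" for I
  proof -
    have pwI: "pairwise (\<lambda>i j. disjnt (?B i) (?B j)) I" using pairwise_subset[OF pw I(1)] .
    have pwI': "pairwise (\<lambda>i j. disjnt (?B i - A) (?B j - A)) I"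
      using pwI by (rule pairwise_mono) (auto simp: disjnt_def)
    have "measure lebesgue (\<Union>i\<in>I. ?B i) = (\<Sum>i\<in>I. measure lebesgue (?B i))"
      using I pwI by (intro measure_UNION') auto
    also have "\<dots> = (\<Sum>i\<in>I. 2 * snd i)"
      using I Kprop by (intro sum.cong refl measure_ball_real) (auto intro: less_imp_le)
    also have "\<dots> \<le> (\<Sum>i\<in>I. (2 / \<epsilon>) * measure lebesgue (?B i - A))"
    proof (rule sum_mono)
      fix i assume "i \<in> I"
      then have "\<epsilon> * snd i \<le> measure lebesgue (?B i - A)" using Kprop I by auto
      then show "2 * snd i \<le> (2 / \<epsilon>) * measure lebesgue (?B i - A)"
        using \<epsilon> by (simp add: field_simps)
    qed
    also have "\<dots> = (2 / \<epsilon>) * measure lebesgue (\<Union>i\<in>I. ?B i - A)"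
    proof -
      have "measure lebesgue (\<Union>i\<in>I. ?B i - A) = (\<Sum>i\<in>I. measure lebesgue (?B i - A))"
        using I pwI' BAm by (intro measure_UNION') auto
      then show ?thesis by (simp add: sum_distrib_left)
    qed
    also have "\<dots> \<le> (2 / \<epsilon>) * measure lebesgue (W - A')"
    proof -
      have "(\<Union>i\<in>I. ?B i - A) \<in> sets lebesgue"
        using I BAm by (intro sets.finite_UN) (auto simp: fmeasurable_def)
      moreover have "(\<Union>i\<in>I. ?B i - A) \<subseteq> W - A'" using BA I by blast
      ultimately have "measure lebesgue (\<Union>i\<in>I. ?B i - A) \<le> measure lebesgue (W - A')"
        using OAfin by (intro measure_mono_fmeasurable) auto
      then show ?thesis using \<epsilon> by (intro mult_left_mono) auto
    qed
    also have "\<dots> \<le> (2 / \<epsilon>) * (\<epsilon> * e / 2)"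
      using \<epsilon> mOA by (intro mult_left_mono) auto
    also have "\<dots> = e" using \<epsilon> by simp
    finally show ?thesis .
  qed
  have Um: "(\<Union>i\<in>C. ?B i) \<in> lmeasurable" and Ule: "measure lebesgue (\<Union>i\<in>C. ?B i) \<le> e"
    using fmeasurable_UN_bound[OF C(1) Bm bound] measure_UN_bound[OF C(1) Bm bound] by auto
  let ?T = "(S - (\<Union>i\<in>C. ?B i)) \<union> (\<Union>i\<in>C. ?B i)"
  have "measure lebesgue ?T = measure lebesgue (\<Union>i\<in>C. ?B i)"
    by (rule measure_negligible_symdiff[OF Um]) (rule negligible_subset[OF negC], auto)
  moreover have "?T \<in> lmeasurable"
    using fmeasurable.Un[OF negligible_imp_measurable[OF negC] Um] .
  ultimately show "\<exists>T. S \<subseteq> T \<and> T \<in> lmeasurable \<and> measure lebesgue T \<le> e"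
    using Ule by (intro exI[of _ ?T]) auto
qed


lemma lebesgue_density:
  fixes A :: "real set" assumes A: "A \<in> sets borel"
  shows "AE x in lborel. x \<in> A \<longrightarrow> ((\<lambda>h. measure lebesgue (ball x h - A) / h) \<longlongrightarrow> 0) (at_right 0)"
proof -
  define S where "S n m = {x \<in> A \<inter> ball 0 (real n). \<forall>d>0. \<exists>h. 0 < h \<and> h < d \<and>
                      h / real (Suc m) \<le> measure lebesgue (ball x h - A)}" for n m :: nat
  have negS: "negligible (S n m)" for n m unfolding S_def by (rule density_negligible[OF A])
  have neg: "negligible (\<Union>n. \<Union>m. S n m)"
    by (intro negligible_Union_nat negS)
  have sub: "x \<in> (\<Union>n. \<Union>m. S n m)"
    if xA: "x \<in> A" and nt: "\<not> ((\<lambda>h. measure lebesgue (ball x h - A) / h) \<longlongrightarrow> 0) (at_right 0)" for x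
  proof (rule ccontr)
    assume "x \<notin> (\<Union>n. \<Union>m. S n m)"
    then have notS: "x \<notin> S n m" for n m by auto
    obtain n :: nat where n: "\<bar>x\<bar> < real n" using reals_Archimedean2 by blast
    then have xb: "x \<in> A \<inter> ball 0 (real n)" using xA by (simp add: dist_real_def)
    have "((\<lambda>h. measure lebesgue (ball x h - A) / h) \<longlongrightarrow> 0) (at_right 0)"
      unfolding tendsto_iff
    proof (intro allI impI)
      fix e :: real assume e: "e > 0"
      obtain m0 :: nat where m0: "m0 > 0" "inverse (real m0) < e" using ex_inverse_of_nat_less[OF e] by auto
      define m where "m = m0 - 1"
      have Sm: "real (Suc m) = real m0" using m0 by (simp add: m_def)
      from notS[of n m] xb obtain d where d: "d > 0"
        "\<And>h. 0 < h \<Longrightarrow> h < d \<Longrightarrow> \<not> h / real (Suc m) \<le> measure lebesgue (ball x h - A)"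
        unfolding S_def by auto
      show "\<forall>\<^sub>F h in at_right 0. dist (measure lebesgue (ball x h - A) / h) 0 < e"
        unfolding eventually_at_right_field
      proof (intro exI[of _ d] conjI allI impI)
        show "0 < d" by fact
        fix h :: real assume h: "0 < h" "h < d"
        have lt: "measure lebesgue (ball x h - A) < h / real m0" using d(2)[OF h] Sm by simp
        have "measure lebesgue (ball x h - A) / h < 1 / real m0"
          using lt h m0 by (simp add: field_simps)
        also have "\<dots> < e" using m0 by (simp add: inverse_eq_divide)
        finally show "dist (measure lebesgue (ball x h - A) / h) 0 < e"
          using h by (simp add: dist_real_def)
      qed
    qed
    with nt show False by simp
  qed
  have "AE x in lebesgue. x \<notin> (\<Union>n. \<Union>m. S n m)"
    using neg by (intro AE_not_in) (simp add: negligible_iff_null_sets)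
  then have "AE x in lborel. x \<notin> (\<Union>n. \<Union>m. S n m)"
    by (simp add: AE_completion_iff)
  then show ?thesis
    by eventually_elim (use sub in blast)
qed

lemma avg_upper:
  fixes g H :: "real \<Rightarrow> real"
  assumes g: "g \<in> borel_measurable borel" "\<And>x. 0 \<le> g x" "\<And>x. g x \<le> 1"
    and int: "\<And>a b. a \<le> b \<Longrightarrow> (\<integral>\<^sup>+x\<in>{a<..b}. ennreal (g x) \<partial>lborel) = ennreal (H b - H a)"
    and A: "A \<in> sets borel" and r: "0 \<le> r" and gA: "\<And>y. y \<in> A \<Longrightarrow> g y \<le> r" and ab: "a \<le> b"
  shows "H b - H a \<le> r * (b - a) + measure lebesgue ({a<..b} - A)"
proof -
  have pt: "ennreal (g y) * indicator {a<..b} y \<le> ennreal r * indicator {a<..b} y + indicator ({a<..b} - A) y" for y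
  proof (cases "y \<in> {a<..b}")
    case True
    show ?thesis
    proof (cases "y \<in> A")
      case True2: True
      then show ?thesis using True gA[OF True2] by (simp add: ennreal_leI)
    next
      case False
      have "g y \<le> r + 1" using g(3)[of y] r by simp
      then have "ennreal (g y) \<le> ennreal (r + 1)" by (rule ennreal_leI)
      then show ?thesis using True False r by (simp add: ennreal_plus)
    qed
  qed simp
  have fin: "emeasure lborel ({a<..b} - A) < \<infinity>"
    by (rule le_less_trans[OF emeasure_mono[of "{a<..b} - A" "{a<..b}"]]) (use ab in auto)
  have "ennreal (H b - H a) = (\<integral>\<^sup>+x\<in>{a<..b}. ennreal (g x) \<partial>lborel)" using int[OF ab] by simp
  also have "\<dots> \<le> (\<integral>\<^sup>+y. (ennreal r * indicator {a<..b} y + indicator ({a<..b} - A) y) \<partial>lborel)"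
    by (intro nn_integral_mono pt)
  also have "\<dots> = ennreal r * emeasure lborel {a<..b} + emeasure lborel ({a<..b} - A)"
    using A by (subst nn_integral_add) (auto simp: nn_integral_cmult_indicator)
  also have "\<dots> = ennreal (r * (b - a) + measure lebesgue ({a<..b} - A))"
    using ab r fin A by (simp add: emeasure_eq_ennreal_measure ennreal_mult ennreal_plus)
  finally show ?thesis
    using ab r by (subst (asm) ennreal_le_iff) (auto intro: add_nonneg_nonneg)
qed

lemma avg_lower:
  fixes g H :: "real \<Rightarrow> real"
  assumes g: "g \<in> borel_measurable borel" "\<And>x. 0 \<le> g x" "\<And>x. g x \<le> 1"
    and int: "\<And>a b. a \<le> b \<Longrightarrow> (\<integral>\<^sup>+x\<in>{a<..b}. ennreal (g x) \<partial>lborel) = ennreal (H b - H a)"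
    and mono: "\<And>a b. a \<le> b \<Longrightarrow> H a \<le> H b"
    and B: "B \<in> sets borel" and r: "0 \<le> r" "r \<le> 1" and gB: "\<And>y. y \<in> B \<Longrightarrow> r \<le> g y" and ab: "a \<le> b"
  shows "r * (b - a) \<le> H b - H a + measure lebesgue ({a<..b} - B)"
proof -
  have pt: "ennreal r * indicator {a<..b} y \<le> ennreal (g y) * indicator {a<..b} y + indicator ({a<..b} - B) y" for y
  proof (cases "y \<in> {a<..b}")
    case True
    show ?thesis
    proof (cases "y \<in> B")
      case True2: True
      then show ?thesis using True gB[OF True2] by (simp add: ennreal_leI)
    next
      case False
      have "r \<le> g y + 1" using g(2)[of y] r by simp
      then have "ennreal r \<le> ennreal (g y + 1)" by (rule ennreal_leI)
      then show ?thesis using True False g(2)[of y] by (simp add: ennreal_plus)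
    qed
  qed simp
  have fin: "emeasure lborel ({a<..b} - B) < \<infinity>"
    by (rule le_less_trans[OF emeasure_mono[of "{a<..b} - B" "{a<..b}"]]) (use ab in auto)
  have "ennreal (r * (b - a)) = (\<integral>\<^sup>+y. ennreal r * indicator {a<..b} y \<partial>lborel)"
    using ab r by (simp add: nn_integral_cmult_indicator ennreal_mult)
  also have "\<dots> \<le> (\<integral>\<^sup>+y. (ennreal (g y) * indicator {a<..b} y + indicator ({a<..b} - B) y) \<partial>lborel)"
    by (intro nn_integral_mono pt)
  also have "\<dots> = (\<integral>\<^sup>+x\<in>{a<..b}. ennreal (g x) \<partial>lborel) + emeasure lborel ({a<..b} - B)"
    using B g(1) by (subst nn_integral_add) auto
  also have "\<dots> = ennreal (H b - H a + measure lebesgue ({a<..b} - B))"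
    using ab fin B int[OF ab] mono[OF ab] by (simp add: emeasure_eq_ennreal_measure ennreal_plus)
  finally show ?thesis
    using ab r mono[OF ab] by (subst (asm) ennreal_le_iff) (auto intro: add_nonneg_nonneg)
qed


lemma h_interval:
  fixes x h :: real and H :: "real \<Rightarrow> real"
  assumes "h \<noteq> 0"
  obtains a b where "a \<le> b" "b - a = \<bar>h\<bar>" "(H (x+h) - H x) / h = (H b - H a) / \<bar>h\<bar>"
    "{a<..b} \<subseteq> ball x (2 * \<bar>h\<bar>)"
proof (cases "h > 0")
  case True
  show ?thesis
    by (rule that[of x "x+h"]) (use True in \<open>auto simp: dist_real_def\<close>)
next
  case False
  then have hn: "h < 0" using assms by simp
  have eq: "(H (x+h) - H x) / h = (H x - H (x+h)) / \<bar>h\<bar>"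
    using hn by (simp add: field_simps)
  show ?thesis
    by (rule that[of "x+h" x]) (use hn eq in \<open>auto simp: dist_real_def\<close>)
qed

lemma dens_bound:
  fixes A :: "real set"
  assumes "((\<lambda>h. measure lebesgue (ball x h - A) / h) \<longlongrightarrow> 0) (at_right 0)" and e: "c > 0"
  obtains b where "b > 0" "\<And>\<delta>. 0 < \<delta> \<Longrightarrow> \<delta> < b \<Longrightarrow> measure lebesgue (ball x \<delta> - A) < c * \<delta>"
proof -
  have "\<forall>\<^sub>F h in at_right 0. dist (measure lebesgue (ball x h - A) / h) 0 < c"
    using assms(1) e by (simp add: tendsto_iff)
  then obtain b where b: "b > 0" "\<And>h. 0 < h \<Longrightarrow> h < b \<Longrightarrow> dist (measure lebesgue (ball x h - A) / h) 0 < c"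
    unfolding eventually_at_right_field by auto
  show ?thesis
  proof (rule that[OF b(1)])
    fix \<delta> :: real assume d: "0 < \<delta>" "\<delta> < b"
    have "measure lebesgue (ball x \<delta> - A) / \<delta> < c"
      using b(2)[OF d] abs_ge_self[of "measure lebesgue (ball x \<delta> - A) / \<delta> - 0"]
      unfolding dist_real_def by linarith
    then show "measure lebesgue (ball x \<delta> - A) < c * \<delta>" using d by (simp add: field_simps)
  qed
qed

lemma measure_interval_diff_le:
  fixes A :: "real set"
  assumes A: "A \<in> sets borel" and sub: "{a<..b} \<subseteq> ball x r"
  shows "measure lebesgue ({a<..b} - A) \<le> measure lebesgue (ball x r - A)"
proof (rule measure_mono_fmeasurable)
  show "{a<..b} - A \<subseteq> ball x r - A" using sub by auto
  show "{a<..b} - A \<in> sets lebesgue" using A by (auto simp: borel_sets_lebesgue)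
  show "ball x r - A \<in> lmeasurable" using A by (intro fmeasurable_Diff) (auto simp: borel_sets_lebesgue)
qed

lemma lip_deriv_ae:
  fixes g H :: "real \<Rightarrow> real"
  assumes g: "g \<in> borel_measurable borel" "\<And>x. 0 \<le> g x" "\<And>x. g x \<le> 1"
    and int: "\<And>a b. a \<le> b \<Longrightarrow> (\<integral>\<^sup>+x\<in>{a<..b}. ennreal (g x) \<partial>lborel) = ennreal (H b - H a)"
    and mono: "\<And>a b. a \<le> b \<Longrightarrow> H a \<le> H b"
  shows "AE x in lborel. (H has_real_derivative g x) (at x)"
proof -
  let ?dens = "\<lambda>A x. ((\<lambda>h. measure lebesgue (ball x h - A) / h) \<longlongrightarrow> 0) (at_right 0)"
  have "AE x in lborel. \<forall>q::rat. (x \<in> {y. g y \<le> of_rat q} \<longrightarrow> ?dens {y. g y \<le> of_rat q} x) \<and>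
                                 (x \<in> {y. of_rat q \<le> g y} \<longrightarrow> ?dens {y. of_rat q \<le> g y} x)"
    unfolding AE_all_countable
  proof
    fix q :: rat
    have m1: "{y. g y \<le> of_rat q} \<in> sets borel" using g(1) by measurable
    have m2: "{y. of_rat q \<le> g y} \<in> sets borel" using g(1) by measurable
    show "AE x in lborel. (x \<in> {y. g y \<le> of_rat q} \<longrightarrow> ?dens {y. g y \<le> of_rat q} x) \<and>
                          (x \<in> {y. of_rat q \<le> g y} \<longrightarrow> ?dens {y. of_rat q \<le> g y} x)"
      using lebesgue_density[OF m1] lebesgue_density[OF m2] by eventually_elim auto
  qed
  then show ?thesis
  proof eventually_elim
    case (elim x)
    note P = elim
    have Qnn: "0 \<le> (H (x+h) - H x) / h" if hne: "h \<noteq> 0" for h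
    proof -
      obtain a b where ab: "a \<le> b" "b - a = \<bar>h\<bar>" "(H (x+h) - H x) / h = (H b - H a) / \<bar>h\<bar>"
        using h_interval[OF hne] by blast
      show ?thesis using ab mono[OF ab(1)] by simp
    qed
    show "(H has_real_derivative g x) (at x)"
      unfolding DERIV_def tendsto_iff
    proof (intro allI impI)
      fix e :: real assume e: "e > 0"
      obtain r1 where r1: "r1 \<in> \<rat>" "g x < r1" "r1 < g x + e/2"
        using Rats_dense_in_real[of "g x" "g x + e/2"] e by auto
      then obtain q1 where q1: "r1 = of_rat q1" by (auto elim: Rats_cases)
      let ?A = "{y. g y \<le> r1}"
      have Ab: "?A \<in> sets borel" using g(1) by measurable
      have dA: "?dens ?A x" using P r1 q1 by auto
      obtain b1 where b1: "b1 > 0" "\<And>\<delta>. 0 < \<delta> \<Longrightarrow> \<delta> < b1 \<Longrightarrow> measure lebesgue (ball x \<delta> - ?A) < e/4 * \<delta>"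
        using dens_bound[OF dA, of "e/4"] e by (metis divide_pos_pos zero_less_numeral)
      have up: "(H (x+h) - H x) / h < g x + e" if h: "h \<noteq> 0" "\<bar>h\<bar> < b1/2" for h
      proof -
        obtain a b where ab: "a \<le> b" "b - a = \<bar>h\<bar>" "(H (x+h) - H x) / h = (H b - H a) / \<bar>h\<bar>"
          "{a<..b} \<subseteq> ball x (2 * \<bar>h\<bar>)"
          using h_interval[OF h(1)] by blast
        have "H b - H a \<le> r1 * (b - a) + measure lebesgue ({a<..b} - ?A)"
          using r1 g(2)[of x] by (intro avg_upper[OF g int Ab _ _ ab(1)]) auto
        also have "\<dots> \<le> r1 * \<bar>h\<bar> + measure lebesgue (ball x (2 * \<bar>h\<bar>) - ?A)"
          using measure_interval_diff_le[OF Ab ab(4)] ab(2) by simp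
        also have "\<dots> < r1 * \<bar>h\<bar> + e/4 * (2 * \<bar>h\<bar>)"
          using b1(2)[of "2 * \<bar>h\<bar>"] h by simp
        finally have "H b - H a < (r1 + e/2) * \<bar>h\<bar>" by (simp add: algebra_simps)
        then have "(H b - H a) / \<bar>h\<bar> < r1 + e/2" using h by (simp add: divide_less_eq)
        then show ?thesis using ab(3) r1 by simp
      qed
      obtain b2 where b2: "b2 > 0" "\<And>h. h \<noteq> 0 \<Longrightarrow> \<bar>h\<bar> < b2 \<Longrightarrow> g x - e < (H (x+h) - H x) / h"
      proof (cases "g x < e")
        case True
        show ?thesis by (rule that[of 1]) (use True Qnn in \<open>auto intro: less_le_trans[of _ 0]\<close>)
      next
        case False
        obtain r2 where r2: "r2 \<in> \<rat>" "g x - e/2 < r2" "r2 < g x"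
          using Rats_dense_in_real[of "g x - e/2" "g x"] e by auto
        then obtain q2 where q2: "r2 = of_rat q2" by (auto elim: Rats_cases)
        have r2p: "0 \<le> r2" "r2 \<le> 1" using r2 False e g(3)[of x] by auto
        let ?B = "{y. r2 \<le> g y}"
        have Bb: "?B \<in> sets borel" using g(1) by measurable
        have dB: "?dens ?B x" using P r2 q2 by auto
        obtain b where b: "b > 0" "\<And>\<delta>. 0 < \<delta> \<Longrightarrow> \<delta> < b \<Longrightarrow> measure lebesgue (ball x \<delta> - ?B) < e/4 * \<delta>"
          using dens_bound[OF dB, of "e/4"] e by (metis divide_pos_pos zero_less_numeral)
        show ?thesis
        proof (rule that[of "b/2"])
          show "b/2 > 0" using b by simp
          fix h :: real assume h: "h \<noteq> 0" "\<bar>h\<bar> < b/2"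
          obtain a c where ab: "a \<le> c" "c - a = \<bar>h\<bar>" "(H (x+h) - H x) / h = (H c - H a) / \<bar>h\<bar>"
            "{a<..c} \<subseteq> ball x (2 * \<bar>h\<bar>)"
            using h_interval[OF h(1)] by blast
          have "r2 * \<bar>h\<bar> \<le> H c - H a + measure lebesgue ({a<..c} - ?B)"
            using avg_lower[OF g int mono Bb r2p _ ab(1)] ab(2) by auto
          also have "\<dots> \<le> H c - H a + measure lebesgue (ball x (2 * \<bar>h\<bar>) - ?B)"
            using measure_interval_diff_le[OF Bb ab(4)] by simp
          also have "\<dots> < H c - H a + e/4 * (2 * \<bar>h\<bar>)"
            using b(2)[of "2 * \<bar>h\<bar>"] h by simp
          finally have "(r2 - e/2) * \<bar>h\<bar> < H c - H a" by (simp add: algebra_simps)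
          then have "r2 - e/2 < (H c - H a) / \<bar>h\<bar>" using h by (simp add: less_divide_eq)
          then show "g x - e < (H (x+h) - H x) / h" using ab(3) r2 by simp
        qed
      qed
      show "\<forall>\<^sub>F h in at 0. dist ((H (x + h) - H x) / h) (g x) < e"
        unfolding eventually_at
      proof (intro exI[of _ "min (b1/2) b2"] conjI allI ballI impI)
        show "0 < min (b1/2) b2" using b1 b2 by simp
        fix h :: real assume h: "h \<noteq> 0 \<and> dist h 0 < min (b1/2) b2"
        then have "(H (x+h) - H x) / h < g x + e" "g x - e < (H (x+h) - H x) / h"
          using up b2(2) by (auto simp: dist_real_def)
        then show "dist ((H (x + h) - H x) / h) (g x) < e" by (simp add: dist_real_def abs_less_iff)
      qed
    qed
  qed
qed


locale idat =
  fixes \<mu> :: "real measure"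
  assumes fb: "finite_borel_measure \<mu>" and Cpos: "Ctot \<mu> > 0"
begin

lemma sets_mu[simp, measurable_cong]: "sets \<mu> = sets borel"
  using fb by (simp add: finite_borel_measure_def)
lemma fin: "finite_measure \<mu>" using fb by (simp add: finite_borel_measure_def)
lemma space_mu[simp]: "space \<mu> = UNIV"
  using sets_eq_imp_space_eq[OF sets_mu] by simp

abbreviation "C \<equiv> Ctot \<mu>"
abbreviation "F \<equiv> F0 \<mu>"
abbreviation "y0 \<equiv> ybar0 \<mu>"
abbreviation "H \<equiv> Hbar0 \<mu>"

lemma C_def': "C = measure \<mu> UNIV" by (simp add: Ctot_def)

lemma F_mono: "x \<le> y \<Longrightarrow> F x \<le> F y"
  unfolding F0_def by (intro finite_measure.finite_measure_mono[OF fin]) auto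

lemma F_nonneg: "0 \<le> F x" by (simp add: F0_def)

lemma F_le_C: "F x \<le> C"
  unfolding F0_def Ctot_def by (intro finite_measure.finite_measure_mono[OF fin]) auto

lemma measure_atMost_le: "measure \<mu> {..y} \<le> F (y + 1)"
  unfolding F0_def by (intro finite_measure.finite_measure_mono[OF fin]) auto

lemma inv_Suc_small: "0 < d \<Longrightarrow> \<exists>n. 1 / real (Suc n) < d"
  using reals_Archimedean[of d] by (auto simp: inverse_eq_divide)

lemma inv_Suc_mono: "m \<le> n \<Longrightarrow> 1 / real (Suc n) \<le> 1 / real (Suc m)"
  by (simp add: frac_le)

lemma F_left: "(\<lambda>n. F (a - 1 / real (Suc n))) \<longlonglongrightarrow> F a"
proof -
  let ?A = "\<lambda>n. {..< a - 1 / real (Suc n)}"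
  have "(\<lambda>n. measure \<mu> (?A n)) \<longlonglongrightarrow> measure \<mu> (\<Union>n. ?A n)"
    by (rule finite_measure.finite_Lim_measure_incseq[OF fin])
       (auto simp: incseq_def dest!: inv_Suc_mono intro: less_le_trans)
  also have "(\<Union>n. ?A n) = {..<a}"
  proof (intro equalityI subsetI)
    fix x assume "x \<in> {..<a}"
    then have "x < a" by simp
    then obtain n where "1 / real (Suc n) < a - x" using inv_Suc_small[of "a - x"] by auto
    then show "x \<in> (\<Union>n. ?A n)" by (auto intro!: exI[of _ n])
  next
    fix x assume "x \<in> (\<Union>n. ?A n)"
    then obtain n where "x < a - 1 / real (Suc n)" by auto
    then show "x \<in> {..<a}" by (auto intro: less_le_trans)
  qed
  finally show ?thesis by (simp add: F0_def)
qed

lemma F_right: "(\<lambda>n. F (a + 1 / real (Suc n))) \<longlonglongrightarrow> measure \<mu> {..a}"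
proof -
  let ?A = "\<lambda>n. {..< a + 1 / real (Suc n)}"
  have "(\<lambda>n. measure \<mu> (?A n)) \<longlonglongrightarrow> measure \<mu> (\<Inter>n. ?A n)"
    by (rule finite_measure.finite_Lim_measure_decseq[OF fin])
       (auto simp: decseq_def dest!: inv_Suc_mono intro: less_le_trans)
  also have "(\<Inter>n. ?A n) = {..a}"
  proof (intro equalityI subsetI)
    fix x assume x: "x \<in> (\<Inter>n. ?A n)"
    show "x \<in> {..a}"
    proof (rule ccontr)
      assume "x \<notin> {..a}"
      then have "a < x" by simp
      then obtain n where n: "1 / real (Suc n) < x - a" using inv_Suc_small[of "x - a"] by auto
      from x have "x < a + 1 / real (Suc n)" by auto
      with n show False by linarith
    qed
  next
    fix x assume "x \<in> {..a}"
    then have "x \<le> a" by simp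
    then show "x \<in> (\<Inter>n. ?A n)" by (auto intro: le_less_trans[of _ a])
  qed
  finally show ?thesis by (simp add: F0_def)
qed

lemma F_top: "(\<lambda>n. F (real n + c)) \<longlonglongrightarrow> C"
proof -
  let ?A = "\<lambda>n. {..< real n + c}"
  have "(\<lambda>n. measure \<mu> (?A n)) \<longlonglongrightarrow> measure \<mu> (\<Union>n. ?A n)"
    by (rule finite_measure.finite_Lim_measure_incseq[OF fin]) (auto simp: incseq_def)
  also have "(\<Union>n. ?A n) = UNIV"
  proof safe
    fix x :: real
    obtain n :: nat where "x - c < real n" using reals_Archimedean2 by blast
    then show "x \<in> (\<Union>n. ?A n)" by (auto intro!: exI[of _ n])
  qed auto
  finally show ?thesis by (simp add: F0_def Ctot_def)
qed

lemma F_bot: "(\<lambda>n. F (c - real n)) \<longlonglongrightarrow> 0"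
proof -
  let ?A = "\<lambda>n. {..< c - real n}"
  have "(\<lambda>n. measure \<mu> (?A n)) \<longlonglongrightarrow> measure \<mu> (\<Inter>n. ?A n)"
    by (rule finite_measure.finite_Lim_measure_decseq[OF fin]) (auto simp: decseq_def)
  also have "(\<Inter>n. ?A n) = {}"
  proof safe
    fix x :: real assume x: "x \<in> (\<Inter>n. ?A n)"
    obtain n :: nat where "c - x < real n" using reals_Archimedean2 by blast
    with x[unfolded INT_iff, rule_format, of n] show "x \<in> {}" by auto
  qed
  finally show ?thesis by (simp add: F0_def)
qed

lemma S_bdd: "bdd_above {x. x + F x < \<xi>}"
  by (rule bdd_aboveI[of _ \<xi>]) (use F_nonneg in \<open>auto intro: add_increasing2[THEN le_less_trans, THEN less_imp_le]\<close>)

lemma S_mem: "\<xi> - C - 1 \<in> {x. x + F x < \<xi>}"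
  using F_le_C[of "\<xi> - C - 1"] by simp

lemma y0_ge: "x + F x < \<xi> \<Longrightarrow> x \<le> y0 \<xi>"
  unfolding ybar0_def by (rule cSup_upper) (use S_bdd in auto)

lemma y0_K1: "x < y0 \<xi> \<Longrightarrow> x + F x < \<xi>"
proof -
  assume "x < y0 \<xi>"
  then obtain x' where x': "x' \<in> {x. x + F x < \<xi>}" "x < x'"
    unfolding ybar0_def using less_cSupE[of x "{x. x + F x < \<xi>}"] S_mem by blast
  then show ?thesis using F_mono[of x x'] by auto
qed

lemma y0_K3: "y0 \<xi> < x \<Longrightarrow> \<xi> \<le> x + F x"
  using y0_ge[of x \<xi>] by linarith

lemma y0_le: "y0 \<xi> \<le> \<xi>"
  unfolding ybar0_def
proof (rule cSup_least)
  show "{x. x + F x < \<xi>} \<noteq> {}" using S_mem by blast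
  fix x assume "x \<in> {x. x + F x < \<xi>}"
  then show "x \<le> \<xi>" using F_nonneg[of x] by auto
qed

lemma y0_lower: "\<xi> - C \<le> y0 \<xi>"
proof (rule ccontr)
  assume "\<not> \<xi> - C \<le> y0 \<xi>"
  then have lt: "y0 \<xi> < \<xi> - C" by simp
  define x where "x = (y0 \<xi> + (\<xi> - C)) / 2"
  have "x < \<xi> - C" using lt by (simp add: x_def)
  then have "x + F x < \<xi>" using F_le_C[of x] by linarith
  then have "x \<le> y0 \<xi>" by (rule y0_ge)
  then show False using lt by (simp add: x_def)
qed

lemma y0_mono: "\<xi>1 \<le> \<xi>2 \<Longrightarrow> y0 \<xi>1 \<le> y0 \<xi>2"
  unfolding ybar0_def
proof (rule cSup_subset_mono)
  show "{x. x + F x < \<xi>1} \<noteq> {}" using S_mem by blast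
  show "bdd_above {x. x + F x < \<xi>2}" by (rule S_bdd)
  assume "\<xi>1 \<le> \<xi>2"
  then show "{x. x + F x < \<xi>1} \<subseteq> {x. x + F x < \<xi>2}" by auto
qed

lemma y0_lip: "\<xi>1 \<le> \<xi>2 \<Longrightarrow> y0 \<xi>2 - y0 \<xi>1 \<le> \<xi>2 - \<xi>1"
proof (rule ccontr)
  assume le: "\<xi>1 \<le> \<xi>2" and "\<not> y0 \<xi>2 - y0 \<xi>1 \<le> \<xi>2 - \<xi>1"
  then have d: "0 < y0 \<xi>2 - y0 \<xi>1 - (\<xi>2 - \<xi>1)" by simp
  define d where "d = y0 \<xi>2 - y0 \<xi>1 - (\<xi>2 - \<xi>1)"
  define e where "e = d/3"
  have d3: "d = 3 * e" by (simp add: e_def)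
  define x where "x = y0 \<xi>1 + e"
  define x' where "x' = y0 \<xi>2 - e"
  have ep: "e > 0" using d d3 d_def by linarith
  have "\<xi>1 \<le> x + F x" using ep by (intro y0_K3) (simp add: x_def)
  moreover have "x' + F x' < \<xi>2" using ep by (intro y0_K1) (simp add: x'_def)
  moreover have "x \<le> x'" using ep le d3 d_def unfolding x_def x'_def by linarith
  moreover have "x' - x = \<xi>2 - \<xi>1 + e" using d3 d_def unfolding x_def x'_def by linarith
  ultimately show False using F_mono[of x x'] ep by linarith
qed

lemma H_eq: "H \<xi> = \<xi> - y0 \<xi>" by (simp add: Hbar0_def)

lemma H_mono: "\<xi>1 \<le> \<xi>2 \<Longrightarrow> H \<xi>1 \<le> H \<xi>2"
  using y0_lip[of \<xi>1 \<xi>2] by (simp add: H_eq)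

lemma H_lip: "\<xi>1 \<le> \<xi>2 \<Longrightarrow> H \<xi>2 - H \<xi>1 \<le> \<xi>2 - \<xi>1"
  using y0_mono[of \<xi>1 \<xi>2] by (simp add: H_eq)

lemma H_nonneg: "0 \<le> H \<xi>" using y0_le[of \<xi>] by (simp add: H_eq)

lemma H_le_C: "H \<xi> \<le> C" using y0_lower[of \<xi>] by (simp add: H_eq)

lemma H_cont: "continuous_on UNIV H"
  by (rule lip_cont[OF H_mono H_lip])

lemma H_lower: "F (y0 \<xi>) \<le> H \<xi>"
proof -
  let ?x = "\<lambda>n. y0 \<xi> - 1 / real (Suc n)"
  have "(\<lambda>n. \<xi> - ?x n) \<longlonglongrightarrow> \<xi> - (y0 \<xi> - 0)"
    by (intro tendsto_intros LIMSEQ_Suc[OF lim_inverse_n'])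
  then have lim2: "(\<lambda>n. \<xi> - ?x n) \<longlonglongrightarrow> H \<xi>" by (simp add: H_eq)
  have "F (?x n) \<le> \<xi> - ?x n" for n
    using y0_K1[of "?x n" \<xi>] by simp
  then show ?thesis
    by (intro LIMSEQ_le[OF F_left lim2]) auto
qed

lemma H_upper: "H \<xi> \<le> measure \<mu> {..y0 \<xi>}"
proof -
  let ?x = "\<lambda>n. y0 \<xi> + 1 / real (Suc n)"
  have "(\<lambda>n. \<xi> - ?x n) \<longlonglongrightarrow> \<xi> - (y0 \<xi> + 0)"
    by (intro tendsto_intros LIMSEQ_Suc[OF lim_inverse_n'])
  then have lim2: "(\<lambda>n. \<xi> - ?x n) \<longlonglongrightarrow> H \<xi>" by (simp add: H_eq)
  have "\<xi> - ?x n \<le> F (?x n)" for n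
    using y0_K3[of \<xi> "?x n"] by simp
  then show ?thesis
    by (intro LIMSEQ_le[OF lim2 F_right]) auto
qed

lemma y0_Phi: "y0 (x + F x) = x"
proof -
  have "{x'. x' + F x' < x + F x} = {..<x}"
  proof safe
    fix x' assume "x' + F x' < x + F x"
    then show "x' < x" using F_mono[of x x'] by (cases "x \<le> x'") auto
  next
    fix x' assume "x' < x" then show "x' + F x' < x + F x" using F_mono[of x' x] by auto
  qed
  then show ?thesis by (simp add: ybar0_def)
qed

lemma H_Phi: "H (x + F x) = F x"
  using y0_Phi[of x] by (simp add: H_eq)

lemma H_bot: "(\<lambda>n. H (c - real n)) \<longlonglongrightarrow> 0"
proof (rule tendsto_sandwich[of "\<lambda>_. 0" _ _ "\<lambda>n. F (c + 1 - real n)"])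
  show "\<forall>\<^sub>F n in sequentially. 0 \<le> H (c - real n)" by (simp add: H_nonneg)
  show "\<forall>\<^sub>F n in sequentially. H (c - real n) \<le> F (c + 1 - real n)"
  proof (intro always_eventually allI)
    fix n
    have "H (c - real n) \<le> F (y0 (c - real n) + 1)"
      using H_upper measure_atMost_le order_trans by blast
    also have "\<dots> \<le> F (c + 1 - real n)" using y0_le[of "c - real n"] by (intro F_mono) simp
    finally show "H (c - real n) \<le> F (c + 1 - real n)" .
  qed
qed (auto intro: F_bot)

lemma H_top: "(\<lambda>n. H (real n + c)) \<longlonglongrightarrow> C"
proof (rule tendsto_sandwich[of "\<lambda>n. F (real n + (c - C))" _ _ "\<lambda>_. C"])
  show "\<forall>\<^sub>F n in sequentially. H (real n + c) \<le> C" by (simp add: H_le_C)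
  show "\<forall>\<^sub>F n in sequentially. F (real n + (c - C)) \<le> H (real n + c)"
  proof (intro always_eventually allI)
    fix n
    have "F (real n + (c - C)) \<le> F (y0 (real n + c))"
      using y0_lower[of "real n + c"] by (intro F_mono) simp
    also have "\<dots> \<le> H (real n + c)" by (rule H_lower)
    finally show "F (real n + (c - C)) \<le> H (real n + c)" .
  qed
qed (auto intro: F_top)

lemma H_small: "0 < \<eta> \<Longrightarrow> \<exists>\<xi>. H \<xi> < \<eta>"
proof -
  assume "0 < \<eta>"
  then have "\<forall>\<^sub>F n in sequentially. H (0 - real n) < \<eta>"
    by (rule order_tendstoD(2)[OF H_bot[of 0]])
  then show ?thesis by (meson eventually_sequentially order_refl)
qed

lemma H_large: "\<eta> < C \<Longrightarrow> \<exists>\<xi>. \<eta> \<le> H \<xi>"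
proof -
  assume "\<eta> < C"
  then have "\<forall>\<^sub>F n in sequentially. \<eta> < H (real n + 0)"
    by (rule order_tendstoD(1)[OF H_top[of 0]])
  then show ?thesis by (meson eventually_sequentially order_refl less_imp_le)
qed

end


lemma Sup_between:
  fixes S :: "real set"
  assumes "\<And>x. x < a \<Longrightarrow> x \<in> S" "\<And>x. x \<in> S \<Longrightarrow> x \<le> a"
  shows "Sup S = a"
proof (rule antisym)
  have ne: "S \<noteq> {}" using assms(1)[of "a - 1"] by auto
  show "Sup S \<le> a" by (rule cSup_least[OF ne]) (use assms(2) in auto)
  have bdd: "bdd_above S" using assms(2) by (meson bdd_aboveI)
  show "a \<le> Sup S"
    by (rule dense_le) (use assms(1) bdd in \<open>auto intro: cSup_upper\<close>)
qed

context idat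
begin

definition Xi :: "real \<Rightarrow> real" where "Xi \<eta> = Inf {\<xi>. \<eta> \<le> H \<xi>}"

lemma Xi_props:
  assumes "0 < \<eta>" "\<eta> < C"
  shows Xi_H: "H (Xi \<eta>) = \<eta>" and Xi_below: "\<And>\<xi>. \<xi> < Xi \<eta> \<Longrightarrow> H \<xi> < \<eta>"
proof -
  let ?T = "{\<xi>. \<eta> \<le> H \<xi>}"
  have ne: "?T \<noteq> {}" using H_large[OF assms(2)] by auto
  obtain \<xi>0 where \<xi>0: "H \<xi>0 < \<eta>" using H_small[OF assms(1)] by auto
  have bdd: "bdd_below ?T"
  proof (rule bdd_belowI[of _ \<xi>0])
    fix \<xi> assume "\<xi> \<in> ?T"
    then show "\<xi>0 \<le> \<xi>" using \<xi>0 H_mono[of \<xi> \<xi>0] by (cases "\<xi> \<le> \<xi>0") auto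
  qed
  have cl: "closed ?T" by (rule closed_Collect_le) (auto intro: H_cont continuous_intros)
  have mem: "Xi \<eta> \<in> ?T" unfolding Xi_def by (rule closed_contains_Inf[OF ne bdd cl])
  show below: "H \<xi> < \<eta>" if "\<xi> < Xi \<eta>" for \<xi>
  proof (rule ccontr)
    assume "\<not> H \<xi> < \<eta>"
    then have "\<xi> \<in> ?T" by simp
    then have "Xi \<eta> \<le> \<xi>" unfolding Xi_def by (rule cInf_lower[OF _ bdd])
    with that show False by simp
  qed
  have l: "(\<lambda>n. Xi \<eta> - 1 / real (Suc n)) \<longlonglongrightarrow> Xi \<eta> - 0"
    by (intro tendsto_intros LIMSEQ_Suc[OF lim_inverse_n'])
  have lim: "(\<lambda>n. H (Xi \<eta> - 1 / real (Suc n))) \<longlonglongrightarrow> H (Xi \<eta>)"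
    using continuous_on_tendsto_compose[OF H_cont l] by simp
  have "H (Xi \<eta>) \<le> \<eta>"
    using lim by (rule LIMSEQ_le_const2) (auto intro!: less_imp_le below)
  with mem show "H (Xi \<eta>) = \<eta>" by simp
qed

lemma Xi_mono:
  assumes "0 < \<eta>1" "\<eta>1 \<le> \<eta>2" "\<eta>2 < C"
  shows "Xi \<eta>1 \<le> Xi \<eta>2"
proof (rule ccontr)
  assume "\<not> Xi \<eta>1 \<le> Xi \<eta>2"
  then have "H (Xi \<eta>2) < \<eta>1" using assms by (intro Xi_below) auto
  moreover have "H (Xi \<eta>2) = \<eta>2" using assms by (intro Xi_H) auto
  ultimately show False using assms by simp
qed

lemma chi_eq:
  assumes "0 < \<eta>" "\<eta> < C"
  shows "chi \<mu> \<eta> = y0 (Xi \<eta>)"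
proof -
  have "{x. measure \<mu> {..<x} < \<eta>} = {x. x + F x < Xi \<eta>}"
  proof safe
    fix x assume x: "measure \<mu> {..<x} < \<eta>"
    show "x + F x < Xi \<eta>"
    proof (rule ccontr)
      assume "\<not> x + F x < Xi \<eta>"
      then have "H (Xi \<eta>) \<le> H (x + F x)" by (intro H_mono) simp
      then show False using x Xi_H[OF assms] H_Phi[of x, unfolded F0_def] by (simp add: F0_def)
    qed
  next
    fix x assume "x + F x < Xi \<eta>"
    then have "H (x + F x) < \<eta>" by (rule Xi_below[OF assms])
    then show "measure \<mu> {..<x} < \<eta>" using H_Phi[of x, unfolded F0_def] by (simp add: F0_def)
  qed
  then show ?thesis by (simp add: chi_def ybar0_def)
qed

lemma UU_eq:
  assumes "0 < \<eta>" "\<eta> < C"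
  shows "UU u \<mu> \<eta> = Ubar0 u \<mu> (Xi \<eta>)"
  by (simp add: UU_def Ubar0_def chi_eq[OF assms])

lemma y0_cont: "continuous_on UNIV y0"
  by (rule lip_cont[OF y0_mono y0_lip])

lemma dens_ex:
  obtains g where "g \<in> borel_measurable borel" "\<And>x. 0 \<le> g x" "\<And>x. g x \<le> 1"
    "\<And>a b. a \<le> b \<Longrightarrow> (\<integral>\<^sup>+x\<in>{a<..b}. ennreal (g x) \<partial>lborel) = ennreal (H b - H a)"
    "density lborel (\<lambda>\<xi>. ennreal (deriv H \<xi>)) = density lborel (\<lambda>\<xi>. ennreal (g \<xi>))"
proof -
  obtain g where g: "g \<in> borel_measurable borel" "\<And>x. 0 \<le> g x" "\<And>x. g x \<le> 1"
    "\<And>a b. a \<le> b \<Longrightarrow> (\<integral>\<^sup>+x\<in>{a<..b}. ennreal (g x) \<partial>lborel) = ennreal (H b - H a)"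
    using lip_density[OF H_mono H_lip] by blast
  have "AE x in lborel. (H has_real_derivative g x) (at x)"
    by (rule lip_deriv_ae[OF g H_mono])
  then have ae: "AE x in lborel. deriv H x = g x"
    by eventually_elim (rule DERIV_imp_deriv)
  have "(\<lambda>A. \<integral>\<^sup>+ x. ennreal (deriv H x) * indicator A x \<partial>lborel) =
        (\<lambda>A. \<integral>\<^sup>+ x. ennreal (g x) * indicator A x \<partial>lborel)"
    by (intro ext nn_integral_cong_AE) (use ae in eventually_elim, simp)
  then have "density lborel (\<lambda>\<xi>. ennreal (deriv H \<xi>)) = density lborel (\<lambda>\<xi>. ennreal (g \<xi>))"
    by (simp add: density_def)
  with g show ?thesis using that by blast
qed

end


context idat
begin

definition gP :: "(real \<Rightarrow> real) \<Rightarrow> bool" where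
  "gP g \<longleftrightarrow> g \<in> borel_measurable borel \<and> (\<forall>x. 0 \<le> g x) \<and> (\<forall>x. g x \<le> 1) \<and>
     (\<forall>a b. a \<le> b \<longrightarrow> (\<integral>\<^sup>+x\<in>{a<..b}. ennreal (g x) \<partial>lborel) = ennreal (H b - H a))"

lemma gP_ex: obtains g where "gP g" "density lborel (\<lambda>\<xi>. ennreal (deriv H \<xi>)) = density lborel (\<lambda>\<xi>. ennreal (g \<xi>))"
  using dens_ex unfolding gP_def by metis

context
  fixes g :: "real \<Rightarrow> real"
  assumes gP: "gP g"
begin

lemma g_meas[measurable]: "g \<in> borel_measurable borel" using gP by (simp add: gP_def)
lemma g_int: "a \<le> b \<Longrightarrow> (\<integral>\<^sup>+x\<in>{a<..b}. ennreal (g x) \<partial>lborel) = ennreal (H b - H a)"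
  using gP by (simp add: gP_def)

abbreviation "D \<equiv> density lborel (\<lambda>x. ennreal (g x))"

lemma emD: "A \<in> sets borel \<Longrightarrow> emeasure D A = (\<integral>\<^sup>+x\<in>A. ennreal (g x) \<partial>lborel)"
  by (simp add: emeasure_density)

lemma int_atMost: "emeasure D {..b} = ennreal (H b)"
proof -
  let ?A = "\<lambda>n::nat. {b - real n<..b}"
  have "(\<lambda>n. emeasure D (?A n)) \<longlonglongrightarrow> emeasure D (\<Union>n. ?A n)"
    by (rule Lim_emeasure_incseq) (auto simp: incseq_def)
  also have "(\<Union>n. ?A n) = {..b}"
  proof (intro equalityI subsetI)
    fix x assume "x \<in> {..b}"
    moreover obtain n :: nat where "b - x < real n" using reals_Archimedean2 by blast
    ultimately show "x \<in> (\<Union>n. ?A n)" by (auto intro!: exI[of _ n])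
  qed auto
  finally have l1: "(\<lambda>n. emeasure D (?A n)) \<longlonglongrightarrow> emeasure D {..b}" .
  have eq: "emeasure D (?A n) = ennreal (H b - H (b - real n))" for n
    by (simp add: emD g_int)
  have "(\<lambda>n. ennreal (H b - H (b - real n))) \<longlonglongrightarrow> ennreal (H b - 0)"
    by (intro tendsto_ennrealI tendsto_diff tendsto_const H_bot)
  with l1 show ?thesis unfolding eq by (simp add: LIMSEQ_unique)
qed

lemma int_lessThan: "emeasure D {..<b} = ennreal (H b)"
proof -
  have "emeasure D {..<b} = (\<integral>\<^sup>+x\<in>{..<b}. ennreal (g x) \<partial>lborel)" by (simp add: emD)
  also have "\<dots> = (\<integral>\<^sup>+x\<in>{..b}. ennreal (g x) \<partial>lborel)"
    by (rule nn_integral_cong_AE) (use AE_lborel_singleton[of b] in eventually_elim, auto split: split_indicator)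
  also have "\<dots> = ennreal (H b)" using int_atMost by (simp add: emD)
  finally show ?thesis .
qed

lemma int_UNIV: "emeasure D UNIV = ennreal C"
proof -
  let ?A = "\<lambda>n::nat. {..real n}"
  have "(\<lambda>n. emeasure D (?A n)) \<longlonglongrightarrow> emeasure D (\<Union>n. ?A n)"
    by (rule Lim_emeasure_incseq) (auto simp: incseq_def)
  also have "(\<Union>n. ?A n) = UNIV"
  proof (intro equalityI subsetI)
    fix x :: real
    obtain n :: nat where "x < real n" using reals_Archimedean2 by blast
    then show "x \<in> (\<Union>n. ?A n)" by (auto intro!: exI[of _ n])
  qed auto
  finally have l1: "(\<lambda>n. emeasure D (?A n)) \<longlonglongrightarrow> emeasure D UNIV" .
  have "(\<lambda>n. ennreal (H (real n + 0))) \<longlonglongrightarrow> ennreal C"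
    by (intro tendsto_ennrealI H_top)
  with l1 show ?thesis unfolding int_atMost by (simp add: LIMSEQ_unique)
qed

lemma D_fin: "emeasure D A \<le> ennreal C"
  using emeasure_mono[of A UNIV D] int_UNIV by simp

lemma chi_t:
  fixes Y :: "real \<Rightarrow> real"
  assumes Yc: "continuous_on UNIV Y" and Ym: "mono Y" and \<eta>: "0 < \<eta>" "\<eta> < C"
  defines "M \<equiv> distr D borel Y"
  shows "chi M \<eta> = Y (Xi \<eta>)" "Ctot M = C"
proof -
  have Yb[measurable]: "Y \<in> borel_measurable borel" using Yc by (rule borel_measurable_continuous_onI)
  have Ypre: "Y -` A \<in> sets borel" if "A \<in> sets borel" for A
    using measurable_sets[OF Yb that] by simp
  have emM: "emeasure M A = emeasure D (Y -` A)" if "A \<in> sets borel" for A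
    unfolding M_def using that by (subst emeasure_distr) auto
  have finM: "emeasure M A < top" if "A \<in> sets borel" for A
    using emM[OF that] D_fin[of "Y -` A"] by (simp add: le_less_trans[OF _ ennreal_less_top])
  let ?X = "Xi \<eta>"
  have i: "measure M {..<x} < \<eta>" if x: "x < Y ?X" for x
  proof -
    obtain d where d: "d > 0" "\<And>\<xi>. dist \<xi> ?X < d \<Longrightarrow> dist (Y \<xi>) (Y ?X) < Y ?X - x"
      using Yc x unfolding continuous_on_iff by (metis UNIV_I diff_gt_0_iff_gt)
    define c where "c = ?X - d/2"
    have "dist (Y c) (Y ?X) < Y ?X - x" using d by (intro d(2)) (simp add: c_def dist_real_def)
    then have Yc_gt: "x < Y c" by (simp add: dist_real_def abs_less_iff)
    have sub: "Y -` {..<x} \<subseteq> {..c}"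
    proof
      fix \<xi> assume "\<xi> \<in> Y -` {..<x}"
      then have "Y \<xi> < x" by simp
      show "\<xi> \<in> {..c}"
      proof (rule ccontr)
        assume "\<xi> \<notin> {..c}"
        then have "Y c \<le> Y \<xi>" using Ym by (simp add: mono_def)
        with \<open>Y \<xi> < x\<close> Yc_gt show False by simp
      qed
    qed
    have "emeasure M {..<x} \<le> emeasure D {..c}"
      unfolding emM[of "{..<x}", simplified] by (rule emeasure_mono[OF sub]) (simp add: Ypre)
    also have "\<dots> = ennreal (H c)" by (rule int_atMost)
    finally have "measure M {..<x} \<le> H c" unfolding measure_def by (intro enn2real_leI H_nonneg)
    also have "H c < \<eta>" using d by (intro Xi_below[OF \<eta>]) (simp add: c_def)
    finally show ?thesis .
  qed
  have ii: "\<eta> \<le> measure M {..<x}" if x: "Y ?X < x" for x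
  proof -
    have sub: "{..?X} \<subseteq> Y -` {..<x}"
    proof
      fix \<xi> assume "\<xi> \<in> {..?X}"
      then have "Y \<xi> \<le> Y ?X" using Ym by (simp add: mono_def)
      then show "\<xi> \<in> Y -` {..<x}" using x by simp
    qed
    have "ennreal \<eta> = emeasure D {..?X}" using int_atMost Xi_H[OF \<eta>] by simp
    also have "\<dots> \<le> emeasure M {..<x}"
      unfolding emM[of "{..<x}", simplified] by (rule emeasure_mono[OF sub]) (simp add: Ypre)
    finally have "enn2real (ennreal \<eta>) \<le> enn2real (emeasure M {..<x})"
      by (rule enn2real_mono) (use finM[of "{..<x}"] in simp)
    then show ?thesis using \<eta> by (simp add: measure_def)
  qed
  show "chi M \<eta> = Y ?X"
    unfolding chi_def
  proof (rule Sup_between)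
    fix x assume "x < Y ?X" then show "x \<in> {x. measure M {..<x} < \<eta>}" using i by simp
  next
    fix x assume "x \<in> {x. measure M {..<x} < \<eta>}"
    then show "x \<le> Y ?X" using ii by (meson linorder_not_le mem_Collect_eq not_le)
  qed
  have "emeasure M UNIV = ennreal C" using emM[of UNIV] int_UNIV by simp
  then show "Ctot M = C" using Cpos by (simp add: Ctot_def measure_def)
qed

end

end


lemma ydiff_gen: "(1/4 * (h2 - c/2) * t\<^sup>2 + u2 * t + y2) - (1/4 * (h1 - c/2) * t\<^sup>2 + u1 * t + y1)
   = t\<^sup>2 * (h2 - h1) / 4 + t * (u2 - u1) + (y2 - y1)" for h1 h2 c t u1 u2 y1 y2 :: real
  by (simp add: field_simps)

lemma udiff_gen: "(1/2 * (h2 - c/2) * t + u2) - (1/2 * (h1 - c/2) * t + u1) = t * (h2 - h1) / 2 + (u2 - u1)"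
  for h1 h2 c t u1 u2 :: real
  by (simp add: field_simps)

lemma sq_gen: "(t * b / 2 + c)\<^sup>2 - b * (t\<^sup>2 * b / 4 + t * c + a) = c\<^sup>2 - a * b" for a b c t :: real
  by (simp add: algebra_simps power2_eq_square)

lemma cs_gen: "d > 0 \<Longrightarrow> 0 \<le> I2 - (2 * (I1/d)) * I1 + d * (I1/d)\<^sup>2 \<Longrightarrow> I1\<^sup>2 \<le> d * I2" for d I1 I2 :: real
proof -
  assume d: "d > 0" and h: "0 \<le> I2 - (2 * (I1/d)) * I1 + d * (I1/d)\<^sup>2"
  have "I2 - (2 * (I1/d)) * I1 + d * (I1/d)\<^sup>2 = I2 - I1\<^sup>2 / d"
    using d by (simp add: power2_eq_square field_simps)
  with h have "I1\<^sup>2 / d \<le> I2" by simp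
  then show ?thesis using d by (simp add: divide_le_eq mult.commute)
qed

lemma sq_exp: "(a::real)\<^sup>2 - (2*m) * a + m\<^sup>2 = (a - m)\<^sup>2"
  by (simp add: power2_eq_square algebra_simps)

locale idat2 = idat +
  fixes u u' :: "real \<Rightarrow> real"
  assumes H1: "H1_with_deriv u u'" and ac: "ac_part_density \<mu> (\<lambda>x. (u' x)\<^sup>2)"
begin

lemma u_int: "a \<le> b \<Longrightarrow> (u' has_integral (u b - u a)) {a..b}"
  using H1 by (simp add: H1_with_deriv_def)

lemma usq_integrable: "integrable lborel (\<lambda>x. (u' x)\<^sup>2)"
  using H1 by (simp add: H1_with_deriv_def)

lemma u_cont: "continuous_on UNIV u"
proof (rule continuous_at_imp_continuous_on, intro ballI)
  fix x :: real
  have int: "u' integrable_on {x-1..x+1}" using u_int[of "x-1" "x+1"] by (auto simp: integrable_on_def)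
  have c: "continuous_on {x-1..x+1} (\<lambda>y. integral {x-1..y} u')"
    by (rule indefinite_integral_continuous_1[OF int])
  have cc: "continuous_on {x-1..x+1} (\<lambda>y. u (x-1) + integral {x-1..y} u')"
    by (intro continuous_intros c)
  have eq: "u (x-1) + integral {x-1..y} u' = u y" if "y \<in> {x-1..x+1}" for y
    using u_int[of "x-1" y] that by (simp add: integral_unique)
  have "continuous_on {x-1..x+1} u" by (rule continuous_on_eq[OF cc eq])
  moreover have "x \<in> interior {x-1..x+1}" by simp
  ultimately show "isCont u x" by (rule continuous_on_interior)
qed

lemma CS:
  assumes pq: "p \<le> q"
  shows "(u q - u p)\<^sup>2 \<le> (q - p) * measure \<mu> {p<..<q}"
proof (cases "p = q")
  case True then show ?thesis by simp
next
  case False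
  then have pq': "p < q" using pq by simp
  define I1 where "I1 = u q - u p"
  have h1: "(u' has_integral I1) {p..q}" unfolding I1_def by (rule u_int[OF pq])
  have si: "set_integrable lborel {p..q} (\<lambda>x. (u' x)\<^sup>2)"
    unfolding set_integrable_def using integrable_mult_indicator[OF _ usq_integrable, of "{p..q}"] by simp
  define I2 where "I2 = integral {p..q} (\<lambda>x. (u' x)\<^sup>2)"
  have h2: "((\<lambda>x. (u' x)\<^sup>2) has_integral I2) {p..q}"
    unfolding I2_def using set_borel_integral_eq_integral(1)[OF si] by (rule integrable_integral)
  define m where "m = I1 / (q - p)"
  have h3: "((\<lambda>x. (u' x)\<^sup>2 - (2*m) * u' x + m\<^sup>2) has_integral (I2 - (2*m) * I1 + (q - p) * m\<^sup>2)) {p..q}"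
  proof -
    have "((\<lambda>x. (2*m) * u' x) has_integral (2*m) * I1) {p..q}"
      by (rule has_integral_cmult_real) (rule h1)
    moreover have "((\<lambda>x. m\<^sup>2) has_integral (q - p) * m\<^sup>2) {p..q}"
      using has_integral_const_real[of "m\<^sup>2" p q] pq by simp
    ultimately show ?thesis by (intro has_integral_add has_integral_diff h2)
  qed
  have h4: "((\<lambda>x. (u' x - m)\<^sup>2) has_integral (I2 - (2*m) * I1 + (q - p) * m\<^sup>2)) {p..q}"
    using h3 unfolding sq_exp .
  have "0 \<le> I2 - (2*m) * I1 + (q - p) * m\<^sup>2"
    by (rule has_integral_nonneg[OF h4]) simp
  then have cs: "I1\<^sup>2 \<le> (q - p) * I2" unfolding m_def using pq' by (intro cs_gen) auto
  have "ennreal I2 = (\<integral>\<^sup>+x. ennreal ((u' x)\<^sup>2) * indicator {p..q} x \<partial>lborel)"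
    by (rule nn_integral_has_integral_lebesgue'[symmetric]) (use h2 in auto)
  also have "\<dots> = (\<integral>\<^sup>+x\<in>{p<..<q}. ennreal ((u' x)\<^sup>2) \<partial>lborel)"
    by (rule nn_integral_cong_AE)
       (use AE_lborel_singleton[of p] AE_lborel_singleton[of q] in eventually_elim, auto split: split_indicator)
  also have "\<dots> = emeasure \<mu> ({p<..<q} - (SOME N. N \<in> sets borel \<and> emeasure lborel N = 0 \<and>
        (\<forall>A \<in> sets borel. emeasure \<mu> (A - N) = (\<integral>\<^sup>+ x\<in>A. ennreal ((u' x)\<^sup>2) \<partial>lborel))))"
  proof -
    from ac obtain N where N: "N \<in> sets borel \<and> emeasure lborel N = 0 \<and>
        (\<forall>A \<in> sets borel. emeasure \<mu> (A - N) = (\<integral>\<^sup>+ x\<in>A. ennreal ((u' x)\<^sup>2) \<partial>lborel))"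
      unfolding ac_part_density_def by blast
    then show ?thesis using someI[of "\<lambda>N. N \<in> sets borel \<and> emeasure lborel N = 0 \<and>
        (\<forall>A \<in> sets borel. emeasure \<mu> (A - N) = (\<integral>\<^sup>+ x\<in>A. ennreal ((u' x)\<^sup>2) \<partial>lborel))", OF N] by auto
  qed
  also have "\<dots> \<le> emeasure \<mu> {p<..<q}" by (rule emeasure_mono) auto
  also have "\<dots> = ennreal (measure \<mu> {p<..<q})"
    using finite_measure.emeasure_eq_measure[OF fin] by simp
  finally have "I2 \<le> measure \<mu> {p<..<q}" by (simp add: ennreal_le_iff)
  then have "(q - p) * I2 \<le> (q - p) * measure \<mu> {p<..<q}" using pq by (intro mult_left_mono) auto
  with cs show ?thesis by (simp add: I1_def)
qed

lemma meas_between: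
  assumes "\<xi>1 \<le> \<xi>2"
  shows "measure \<mu> {y0 \<xi>1<..<y0 \<xi>2} \<le> H \<xi>2 - H \<xi>1"
proof (cases "y0 \<xi>1 < y0 \<xi>2")
  case False
  then have "{y0 \<xi>1<..<y0 \<xi>2} = {}" by auto
  then show ?thesis using H_mono[OF assms] by simp
next
  case True
  have eq: "{..<y0 \<xi>2} = {..y0 \<xi>1} \<union> {y0 \<xi>1<..<y0 \<xi>2}" using True by auto
  have "measure \<mu> ({..y0 \<xi>1} \<union> {y0 \<xi>1<..<y0 \<xi>2}) = measure \<mu> {..y0 \<xi>1} + measure \<mu> {y0 \<xi>1<..<y0 \<xi>2}"
    by (rule finite_measure.finite_measure_Union[OF fin]) auto
  then have "F (y0 \<xi>2) = measure \<mu> {..y0 \<xi>1} + measure \<mu> {y0 \<xi>1<..<y0 \<xi>2}"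
    unfolding F0_def eq .
  then show ?thesis using H_lower[of \<xi>2] H_upper[of \<xi>1] by linarith
qed

abbreviation "U0 \<equiv> Ubar0 u \<mu>"
abbreviation "Yt t \<equiv> ybar u \<mu> t"
abbreviation "Ut t \<equiv> Ubar u \<mu> t"

lemma U0_CS:
  assumes "\<xi>1 \<le> \<xi>2"
  shows "(U0 \<xi>2 - U0 \<xi>1)\<^sup>2 \<le> (y0 \<xi>2 - y0 \<xi>1) * (H \<xi>2 - H \<xi>1)"
proof -
  have le: "y0 \<xi>1 \<le> y0 \<xi>2" by (rule y0_mono[OF assms])
  have "(U0 \<xi>2 - U0 \<xi>1)\<^sup>2 \<le> (y0 \<xi>2 - y0 \<xi>1) * measure \<mu> {y0 \<xi>1<..<y0 \<xi>2}"
    unfolding Ubar0_def by (rule CS[OF le])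
  also have "\<dots> \<le> (y0 \<xi>2 - y0 \<xi>1) * (H \<xi>2 - H \<xi>1)"
    using le by (intro mult_left_mono meas_between[OF assms]) auto
  finally show ?thesis .
qed

lemma UY:
  assumes "\<xi>1 \<le> \<xi>2"
  shows "(Ut t \<xi>2 - Ut t \<xi>1)\<^sup>2 \<le> (H \<xi>2 - H \<xi>1) * (Yt t \<xi>2 - Yt t \<xi>1)"
proof -
  define a where "a = y0 \<xi>2 - y0 \<xi>1"
  define b where "b = H \<xi>2 - H \<xi>1"
  define c where "c = U0 \<xi>2 - U0 \<xi>1"
  have cab: "c\<^sup>2 \<le> a * b" unfolding a_def b_def c_def by (rule U0_CS[OF assms])
  have eU: "Ut t \<xi>2 - Ut t \<xi>1 = t * b / 2 + c"
    unfolding Ubar_def b_def c_def by (rule udiff_gen)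
  have eY: "Yt t \<xi>2 - Yt t \<xi>1 = t\<^sup>2 * b / 4 + t * c + a"
    unfolding ybar_def a_def b_def c_def by (rule ydiff_gen)
  have "(t * b / 2 + c)\<^sup>2 - b * (t\<^sup>2 * b / 4 + t * c + a) = c\<^sup>2 - a * b"
    by (rule sq_gen)
  then show ?thesis unfolding eU eY b_def[symmetric] using cab by linarith
qed

lemma Ydiff: "Yt t \<xi>2 - Yt t \<xi>1 = t\<^sup>2 * (H \<xi>2 - H \<xi>1) / 4 + t * (U0 \<xi>2 - U0 \<xi>1) + (y0 \<xi>2 - y0 \<xi>1)"
  unfolding ybar_def by (rule ydiff_gen)

lemma Y_mono: "mono (Yt t)"
proof (rule monoI)
  fix \<xi>1 \<xi>2 :: real assume le: "\<xi>1 \<le> \<xi>2"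
  show "Yt t \<xi>1 \<le> Yt t \<xi>2"
  proof (cases "H \<xi>1 < H \<xi>2")
    case True
    have sq: "0 \<le> (Ut t \<xi>2 - Ut t \<xi>1)\<^sup>2" by simp
    have prod: "0 \<le> (H \<xi>2 - H \<xi>1) * (Yt t \<xi>2 - Yt t \<xi>1)"
      by (rule order_trans[OF sq UY[OF le]])
    show ?thesis
    proof (rule ccontr)
      assume "\<not> Yt t \<xi>1 \<le> Yt t \<xi>2"
      then have "(H \<xi>2 - H \<xi>1) * (Yt t \<xi>2 - Yt t \<xi>1) < 0"
        using True by (intro mult_pos_neg) auto
      with prod show False by linarith
    qed
  next
    case False
    then have hb: "H \<xi>2 - H \<xi>1 = 0" using H_mono[OF le] by simp
    then have "(U0 \<xi>2 - U0 \<xi>1)\<^sup>2 \<le> 0" using U0_CS[OF le] by simp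
    then have uc: "U0 \<xi>2 - U0 \<xi>1 = 0" by simp
    have "Yt t \<xi>2 - Yt t \<xi>1 = y0 \<xi>2 - y0 \<xi>1" unfolding Ydiff hb uc by simp
    then show ?thesis using y0_mono[OF le] by linarith
  qed
qed

lemma U_welldef:
  assumes eqY: "Yt t a = Yt t b"
  shows "Ut t a = Ut t b"
proof -
  have *: "Ut t a = Ut t b" if le: "a \<le> b" and eq: "Yt t a = Yt t b" for a b
  proof -
    have "(Ut t b - Ut t a)\<^sup>2 \<le> 0" using UY[OF le, of t] eq by simp
    then show ?thesis by simp
  qed
  show ?thesis
  proof (cases "a \<le> b")
    case True
    show ?thesis by (rule *[OF True eqY])
  next
    case False
    then have ba: "b \<le> a" by simp
    have "Yt t b = Yt t a" using eqY by (rule sym)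
    from *[OF ba this] show ?thesis by (rule sym)
  qed
qed

lemma U0_cont: "continuous_on UNIV U0"
proof -
  have "continuous_on UNIV (\<lambda>\<xi>. u (y0 \<xi>))"
    by (rule continuous_on_compose2[OF u_cont y0_cont]) auto
  then show ?thesis by (simp add: Ubar0_def[abs_def])
qed

lemma Y_cont: "continuous_on UNIV (Yt t)"
proof -
  have c1: "continuous_on UNIV (\<lambda>\<xi>. 1/4 * (H \<xi> - C / 2) * t\<^sup>2)"
    by (intro continuous_on_mult_right continuous_on_mult_left continuous_on_diff H_cont continuous_on_const)
  have c2: "continuous_on UNIV (\<lambda>\<xi>. U0 \<xi> * t)"
    by (intro continuous_on_mult_right U0_cont)
  have "continuous_on UNIV (\<lambda>\<xi>. 1/4 * (H \<xi> - C / 2) * t\<^sup>2 + U0 \<xi> * t + y0 \<xi>)"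
    by (intro continuous_on_add c1 c2 y0_cont)
  then show ?thesis unfolding ybar_def[abs_def] .
qed

lemma HS_u_eq: "HS_u u \<mu> t (Yt t \<xi>) = Ut t \<xi>"
proof -
  have "Yt t (SOME \<xi>'. Yt t \<xi>' = Yt t \<xi>) = Yt t \<xi>" by (rule someI) (rule refl)
  then show ?thesis unfolding HS_u_def by (rule U_welldef)
qed

end


context idat2
begin

lemma Ut_cont: "continuous_on UNIV (Ut t)"
proof -
  have "continuous_on UNIV (\<lambda>\<xi>. 1/2 * (H \<xi> - C / 2) * t + U0 \<xi>)"
    by (intro continuous_on_add continuous_on_mult_right continuous_on_mult_left continuous_on_diff
        H_cont continuous_on_const U0_cont)
  then show ?thesis unfolding Ubar_def[abs_def] .
qed

lemma formulas:
  assumes gP: "gP g"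
    and deq: "density lborel (\<lambda>\<xi>. ennreal (deriv H \<xi>)) = density lborel (\<lambda>\<xi>. ennreal (g \<xi>))"
    and \<eta>: "0 < \<eta>" "\<eta> < C"
  shows "UU u \<mu> \<eta> = U0 (Xi \<eta>)" "chi \<mu> \<eta> = y0 (Xi \<eta>)"
    "UU (HS_u u \<mu> t) (HS_mu u \<mu> t) \<eta> = Ut t (Xi \<eta>)"
    "chi (HS_mu u \<mu> t) \<eta> = Yt t (Xi \<eta>)"
    "Ut t (Xi \<eta>) = 1/2 * (\<eta> - C / 2) * t + U0 (Xi \<eta>)"
    "Yt t (Xi \<eta>) = 1/4 * (\<eta> - C / 2) * t\<^sup>2 + U0 (Xi \<eta>) * t + y0 (Xi \<eta>)"
    "Ctot (HS_mu u \<mu> t) = C"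
proof -
  have M: "HS_mu u \<mu> t = distr (density lborel (\<lambda>x. ennreal (g x))) borel (Yt t)"
    unfolding HS_mu_def deq ..
  note ct = chi_t[OF gP Y_cont Y_mono \<eta>]
  show "UU u \<mu> \<eta> = U0 (Xi \<eta>)" by (rule UU_eq[OF \<eta>])
  show "chi \<mu> \<eta> = y0 (Xi \<eta>)" by (rule chi_eq[OF \<eta>])
  show chit: "chi (HS_mu u \<mu> t) \<eta> = Yt t (Xi \<eta>)" unfolding M by (rule ct(1))
  show "UU (HS_u u \<mu> t) (HS_mu u \<mu> t) \<eta> = Ut t (Xi \<eta>)"
    unfolding UU_def chit by (rule HS_u_eq)
  show "Ut t (Xi \<eta>) = 1/2 * (\<eta> - C / 2) * t + U0 (Xi \<eta>)"
    by (simp add: Ubar_def Xi_H[OF \<eta>])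
  show "Yt t (Xi \<eta>) = 1/4 * (\<eta> - C / 2) * t\<^sup>2 + U0 (Xi \<eta>) * t + y0 (Xi \<eta>)"
    by (simp add: ybar_def Xi_H[OF \<eta>])
  show "Ctot (HS_mu u \<mu> t) = C" unfolding M by (rule ct(2))
qed

lemma Xs_meas: "(\<lambda>s. Xi (C * s)) \<in> borel_measurable (restrict_space borel {0<..<1})"
proof (rule borel_measurable_mono_on_fnc)
  show "mono_on {0<..<1} (\<lambda>s. Xi (C * s))"
  proof (rule mono_onI)
    fix r s :: real assume "r \<in> {0<..<1}" "s \<in> {0<..<1}" "r \<le> s"
    then show "Xi (C * r) \<le> Xi (C * s)"
      using Cpos by (intro Xi_mono) (auto intro: mult_pos_pos mult_left_mono)
  qed
qed

lemma P_meas: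
  assumes f: "continuous_on UNIV f"
  shows "(\<lambda>s. if s \<in> {0<..<1} then f (Xi (C * s)) else 0) \<in> borel_measurable borel"
proof -
  have fb: "f \<in> borel_measurable borel" using f by (rule borel_measurable_continuous_onI)
  have "(\<lambda>s. f (Xi (C * s))) \<in> borel_measurable (restrict_space borel {0<..<1})"
    by (rule measurable_compose[OF Xs_meas fb])
  then show ?thesis
    by (subst (asm) measurable_restrict_space_iff[where c=0]) auto
qed

end


lemma bound1:
  fixes t s C1 C2 A1 A2 :: real
  assumes t: "0 \<le> t" and s: "0 < s" "s < 1"
  shows "\<bar>(1/2 * (C1 * s - C1 / 2) * t + A1) - (1/2 * (C2 * s - C2 / 2) * t + A2)\<bar>
         \<le> \<bar>A1 - A2\<bar> + t / 4 * \<bar>C1 - C2\<bar>"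
proof -
  have e: "(1/2 * (C1 * s - C1 / 2) * t + A1) - (1/2 * (C2 * s - C2 / 2) * t + A2)
        = (t / 2 * (C1 - C2)) * (s - 1/2) + (A1 - A2)" by (simp add: field_simps)
  have k: "\<bar>s - 1/2\<bar> \<le> 1/2" using s unfolding abs_le_iff by linarith
  have "\<bar>(t / 2 * (C1 - C2)) * (s - 1/2)\<bar> = \<bar>t / 2 * (C1 - C2)\<bar> * \<bar>s - 1/2\<bar>" by (rule abs_mult)
  also have "\<dots> \<le> \<bar>t / 2 * (C1 - C2)\<bar> * (1/2)" by (rule mult_left_mono[OF k]) simp
  also have "\<dots> = t / 4 * \<bar>C1 - C2\<bar>" using t by (simp add: abs_mult)
  finally show ?thesis unfolding e by linarith
qed

lemma bound2:
  fixes t s C1 C2 A1 A2 B1 B2 :: real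
  assumes t: "0 \<le> t" and s: "0 < s" "s < 1"
  shows "\<bar>(1/4 * (C1 * s - C1 / 2) * t\<^sup>2 + A1 * t + B1) - (1/4 * (C2 * s - C2 / 2) * t\<^sup>2 + A2 * t + B2)\<bar>
         \<le> \<bar>B1 - B2\<bar> + t * \<bar>A1 - A2\<bar> + t\<^sup>2 / 8 * \<bar>C1 - C2\<bar>"
proof -
  have e: "(1/4 * (C1 * s - C1 / 2) * t\<^sup>2 + A1 * t + B1) - (1/4 * (C2 * s - C2 / 2) * t\<^sup>2 + A2 * t + B2)
        = (t\<^sup>2 / 4 * (C1 - C2)) * (s - 1/2) + t * (A1 - A2) + (B1 - B2)" by (simp add: field_simps)
  have k: "\<bar>s - 1/2\<bar> \<le> 1/2" using s unfolding abs_le_iff by linarith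
  have "\<bar>(t\<^sup>2 / 4 * (C1 - C2)) * (s - 1/2)\<bar> = \<bar>t\<^sup>2 / 4 * (C1 - C2)\<bar> * \<bar>s - 1/2\<bar>" by (rule abs_mult)
  also have "\<dots> \<le> \<bar>t\<^sup>2 / 4 * (C1 - C2)\<bar> * (1/2)" by (rule mult_left_mono[OF k]) simp
  also have "\<dots> = t\<^sup>2 / 8 * \<bar>C1 - C2\<bar>" by (simp add: abs_mult)
  finally have 1: "\<bar>(t\<^sup>2 / 4 * (C1 - C2)) * (s - 1/2)\<bar> \<le> t\<^sup>2 / 8 * \<bar>C1 - C2\<bar>" .
  have 2: "\<bar>t * (A1 - A2)\<bar> = t * \<bar>A1 - A2\<bar>" using t by (simp add: abs_mult)
  show ?thesis unfolding e using 1 2 by linarith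
qed

lemma final_alg:
  fixes e b c t :: real
  assumes "0 \<le> e" "0 \<le> b" "0 \<le> c" "0 \<le> t"
  shows "(e + t / 4 * c) + (b + t * e + t\<^sup>2 / 8 * c) + c \<le> (1 + t + t\<^sup>2 / 8) * (e + b + c)"
proof -
  have "(1 + t + t\<^sup>2 / 8) * (e + b + c) - ((e + t / 4 * c) + (b + t * e + t\<^sup>2 / 8 * c) + c)
        = t * b + 3/4 * (t * c) + t\<^sup>2 / 8 * e + t\<^sup>2 / 8 * b"
    by (simp add: algebra_simps power2_eq_square)
  moreover have "0 \<le> t * b" "0 \<le> t * c" "0 \<le> t\<^sup>2 * e" "0 \<le> t\<^sup>2 * b" using assms by auto
  ultimately show ?thesis by linarith
qed

lemma meas_N:
  fixes f f' :: "real \<Rightarrow> real"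
  assumes f': "f' \<in> borel_measurable borel" and eq: "\<And>s. s \<in> {0<..<1} \<Longrightarrow> f s = f' s"
  shows "(\<lambda>s. ereal (f s)) \<in> borel_measurable (restrict_space lborel {0..1})"
proof -
  define h where "h s = (if s \<in> {0} then f 0 else if s \<in> {1} then f 1 else f' s)" for s
  have hm: "h \<in> borel_measurable borel"
    unfolding h_def[abs_def] by (intro measurable_If_set measurable_const f') auto
  have "(\<lambda>s. ereal (h s)) \<in> borel_measurable (restrict_space lborel {0..1})"
    using hm by (intro measurable_restrict_space1) simp
  moreover have "ereal (f w) = ereal (h w)" if "w \<in> space (restrict_space lborel {0..1::real})" for w
  proof -
    have w: "w \<in> {0..1}" using that by (simp add: space_restrict_space)
    show ?thesis
    proof (cases "w = 0 \<or> w = 1")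
      case True then show ?thesis by (auto simp: h_def)
    next
      case False
      then have "w \<in> {0<..<1}" using w by auto
      then show ?thesis using False by (simp add: h_def eq)
    qed
  qed
  ultimately show ?thesis by (subst measurable_cong) auto
qed


theorem theorem2p2:
  fixes u01 u02 u01' u02' :: "real \<Rightarrow> real" and \<mu>01 \<mu>02 :: "real measure" and t :: real
  assumes H1: "H1_with_deriv u01 u01'" "H1_with_deriv u02 u02'"
    and meas: "finite_borel_measure \<mu>01" "finite_borel_measure \<mu>02"
    and ac: "ac_part_density \<mu>01 (\<lambda>x. (u01' x)\<^sup>2)" "ac_part_density \<mu>02 (\<lambda>x. (u02' x)\<^sup>2)"
    and Cpos: "Ctot \<mu>01 > 0" "Ctot \<mu>02 > 0"
    and tails1: "(\<integral>\<^sup>+ x\<in>{..0}. ennreal (F0 \<mu>01 x) \<partial>lborel)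
                 + (\<integral>\<^sup>+ x\<in>{0..}. ennreal (Ctot \<mu>01 - F0 \<mu>01 x) \<partial>lborel) < \<infinity>"
    and tails2: "(\<integral>\<^sup>+ x\<in>{..0}. ennreal (F0 \<mu>02 x) \<partial>lborel)
                 + (\<integral>\<^sup>+ x\<in>{0..}. ennreal (Ctot \<mu>02 - F0 \<mu>02 x) \<partial>lborel) < \<infinity>"
    and t: "t \<ge> 0"
  shows "dHS (HS_u u01 \<mu>01 t) (HS_mu u01 \<mu>01 t) (HS_u u02 \<mu>02 t) (HS_mu u02 \<mu>02 t)
         \<le> ereal (1 + t + t\<^sup>2 / 8) * dHS u01 \<mu>01 u02 \<mu>02"
proof -
  interpret d1: idat2 \<mu>01 u01 u01'
    by unfold_locales (use meas(1) Cpos(1) H1(1) ac(1) in auto)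
  interpret d2: idat2 \<mu>02 u02 u02'
    by unfold_locales (use meas(2) Cpos(2) H1(2) ac(2) in auto)
  obtain g1 where g1: "d1.gP g1"
    "density lborel (\<lambda>\<xi>. ennreal (deriv (Hbar0 \<mu>01) \<xi>)) = density lborel (\<lambda>\<xi>. ennreal (g1 \<xi>))"
    by (rule d1.gP_ex)
  obtain g2 where g2: "d2.gP g2"
    "density lborel (\<lambda>\<xi>. ennreal (deriv (Hbar0 \<mu>02) \<xi>)) = density lborel (\<lambda>\<xi>. ennreal (g2 \<xi>))"
    by (rule d2.gP_ex)
  define C1 where "C1 = Ctot \<mu>01"
  define C2 where "C2 = Ctot \<mu>02"
  have C1p: "C1 > 0" and C2p: "C2 > 0" using Cpos by (simp_all add: C1_def C2_def)
  have eta1: "0 < C1 * s" "C1 * s < Ctot \<mu>01" if "s \<in> {0<..<1}" for s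
    using that C1p by (auto simp: C1_def)
  have eta2: "0 < C2 * s" "C2 * s < Ctot \<mu>02" if "s \<in> {0<..<1}" for s
    using that C2p by (auto simp: C2_def)
  have half: "(1/2::real) \<in> {0<..<1}" by simp
  have CT1: "Ctot (HS_mu u01 \<mu>01 t) = C1"
    using d1.formulas(7)[OF g1 eta1[OF half], of t] by (simp add: C1_def)
  have CT2: "Ctot (HS_mu u02 \<mu>02 t) = C2"
    using d2.formulas(7)[OF g2 eta2[OF half], of t] by (simp add: C2_def)
  define X1 where "X1 s = d1.Xi (C1 * s)" for s
  define X2 where "X2 s = d2.Xi (C2 * s)" for s
  define a0 where "a0 s = \<bar>UU u01 \<mu>01 (C1 * s) - UU u02 \<mu>02 (C2 * s)\<bar>" for s
  define b0 where "b0 s = \<bar>chi \<mu>01 (C1 * s) - chi \<mu>02 (C2 * s)\<bar>" for s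
  define ta where "ta s = \<bar>UU (HS_u u01 \<mu>01 t) (HS_mu u01 \<mu>01 t) (C1 * s)
                         - UU (HS_u u02 \<mu>02 t) (HS_mu u02 \<mu>02 t) (C2 * s)\<bar>" for s
  define tb where "tb s = \<bar>chi (HS_mu u01 \<mu>01 t) (C1 * s) - chi (HS_mu u02 \<mu>02 t) (C2 * s)\<bar>" for s
  define c where "c = \<bar>C1 - C2\<bar>"
  have a0X: "a0 s = \<bar>Ubar0 u01 \<mu>01 (X1 s) - Ubar0 u02 \<mu>02 (X2 s)\<bar>" if s: "s \<in> {0<..<1}" for s
    unfolding a0_def X1_def X2_def using d1.formulas(1)[OF g1 eta1[OF s]] d2.formulas(1)[OF g2 eta2[OF s]] by simp
  have b0X: "b0 s = \<bar>ybar0 \<mu>01 (X1 s) - ybar0 \<mu>02 (X2 s)\<bar>" if s: "s \<in> {0<..<1}" for s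
    unfolding b0_def X1_def X2_def using d1.formulas(2)[OF g1 eta1[OF s]] d2.formulas(2)[OF g2 eta2[OF s]] by simp
  have taX: "ta s = \<bar>Ubar u01 \<mu>01 t (X1 s) - Ubar u02 \<mu>02 t (X2 s)\<bar>" if s: "s \<in> {0<..<1}" for s
    unfolding ta_def X1_def X2_def using d1.formulas(3)[OF g1 eta1[OF s], of t] d2.formulas(3)[OF g2 eta2[OF s], of t] by simp
  have tbX: "tb s = \<bar>ybar u01 \<mu>01 t (X1 s) - ybar u02 \<mu>02 t (X2 s)\<bar>" if s: "s \<in> {0<..<1}" for s
    unfolding tb_def X1_def X2_def using d1.formulas(4)[OF g1 eta1[OF s], of t] d2.formulas(4)[OF g2 eta2[OF s], of t] by simp
  have pa: "ta s \<le> a0 s + t / 4 * c" if s: "s \<in> {0<..<1}" for s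
  proof -
    have "ta s = \<bar>(1/2 * (C1 * s - C1 / 2) * t + Ubar0 u01 \<mu>01 (X1 s))
                 - (1/2 * (C2 * s - C2 / 2) * t + Ubar0 u02 \<mu>02 (X2 s))\<bar>"
      unfolding taX[OF s] X1_def X2_def using d1.formulas(5)[OF g1 eta1[OF s], of t] d2.formulas(5)[OF g2 eta2[OF s], of t]
      by (simp add: C1_def C2_def)
    also have "\<dots> \<le> a0 s + t / 4 * c"
      unfolding a0X[OF s] c_def using bound1[OF t] s by simp
    finally show ?thesis .
  qed
  have pb: "tb s \<le> b0 s + t * a0 s + t\<^sup>2 / 8 * c" if s: "s \<in> {0<..<1}" for s
  proof -
    have "tb s = \<bar>(1/4 * (C1 * s - C1 / 2) * t\<^sup>2 + Ubar0 u01 \<mu>01 (X1 s) * t + ybar0 \<mu>01 (X1 s))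
                 - (1/4 * (C2 * s - C2 / 2) * t\<^sup>2 + Ubar0 u02 \<mu>02 (X2 s) * t + ybar0 \<mu>02 (X2 s))\<bar>"
      unfolding tbX[OF s] X1_def X2_def using d1.formulas(6)[OF g1 eta1[OF s], of t] d2.formulas(6)[OF g2 eta2[OF s], of t]
      by (simp add: C1_def C2_def)
    also have "\<dots> \<le> b0 s + t * a0 s + t\<^sup>2 / 8 * c"
      unfolding a0X[OF s] b0X[OF s] c_def using bound2[OF t] s by simp
    finally show ?thesis .
  qed
  define N where "N = restrict_space lborel {0..1::real}"
  have spN: "space N = {0..1}" by (simp add: N_def space_restrict_space)
  have setsN: "{0..1::real} \<inter> space lborel \<in> sets lborel" by simp
  have AEN: "AE s in N. s \<in> {0<..<1}"
    unfolding N_def AE_restrict_space_iff[OF setsN]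
    using AE_lborel_singleton[of 0] AE_lborel_singleton[of 1] by eventually_elim auto
  have emN: "emeasure N (space N) = 1"
    unfolding spN N_def by (subst emeasure_restrict_space) auto
  have PU1: "(\<lambda>s. if s \<in> {0<..<1} then Ubar0 u01 \<mu>01 (X1 s) else 0) \<in> borel_measurable borel"
    unfolding X1_def C1_def by (rule d1.P_meas[OF d1.U0_cont])
  have PU2: "(\<lambda>s. if s \<in> {0<..<1} then Ubar0 u02 \<mu>02 (X2 s) else 0) \<in> borel_measurable borel"
    unfolding X2_def C2_def by (rule d2.P_meas[OF d2.U0_cont])
  have Py1: "(\<lambda>s. if s \<in> {0<..<1} then ybar0 \<mu>01 (X1 s) else 0) \<in> borel_measurable borel"
    unfolding X1_def C1_def by (rule d1.P_meas[OF d1.y0_cont])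
  have Py2: "(\<lambda>s. if s \<in> {0<..<1} then ybar0 \<mu>02 (X2 s) else 0) \<in> borel_measurable borel"
    unfolding X2_def C2_def by (rule d2.P_meas[OF d2.y0_cont])
  have PUt1: "(\<lambda>s. if s \<in> {0<..<1} then Ubar u01 \<mu>01 t (X1 s) else 0) \<in> borel_measurable borel"
    unfolding X1_def C1_def by (rule d1.P_meas[OF d1.Ut_cont])
  have PUt2: "(\<lambda>s. if s \<in> {0<..<1} then Ubar u02 \<mu>02 t (X2 s) else 0) \<in> borel_measurable borel"
    unfolding X2_def C2_def by (rule d2.P_meas[OF d2.Ut_cont])
  have PY1: "(\<lambda>s. if s \<in> {0<..<1} then ybar u01 \<mu>01 t (X1 s) else 0) \<in> borel_measurable borel"
    unfolding X1_def C1_def by (rule d1.P_meas[OF d1.Y_cont])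
  have PY2: "(\<lambda>s. if s \<in> {0<..<1} then ybar u02 \<mu>02 t (X2 s) else 0) \<in> borel_measurable borel"
    unfolding X2_def C2_def by (rule d2.P_meas[OF d2.Y_cont])
  have mb0: "(\<lambda>s. if s \<in> {0<..<1} then b0 s else 0) \<in> borel_measurable borel"
  proof -
    have "(\<lambda>s. if s \<in> {0<..<1} then b0 s else 0) = (\<lambda>s. \<bar>(if s \<in> {0<..<1} then ybar0 \<mu>01 (X1 s) else 0)
          - (if s \<in> {0<..<1} then ybar0 \<mu>02 (X2 s) else 0)\<bar>)"
      by (rule ext) (simp add: b0X)
    then show ?thesis using Py1 Py2 by simp
  qed
  have mta: "(\<lambda>s. if s \<in> {0<..<1} then ta s else 0) \<in> borel_measurable borel"
  proof -
    have "(\<lambda>s. if s \<in> {0<..<1} then ta s else 0) = (\<lambda>s. \<bar>(if s \<in> {0<..<1} then Ubar u01 \<mu>01 t (X1 s) else 0)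
          - (if s \<in> {0<..<1} then Ubar u02 \<mu>02 t (X2 s) else 0)\<bar>)"
      by (rule ext) (simp add: taX)
    then show ?thesis using PUt1 PUt2 by simp
  qed
  define E where "E = esssup N (\<lambda>s. ereal (a0 s))"
  define B where "B = (\<integral>\<^sup>+ s\<in>{0..1}. ennreal (b0 s) \<partial>lborel)"
  have dR: "dHS u01 \<mu>01 u02 \<mu>02 = E + enn2ereal B + ereal c"
    by (simp add: dHS_def E_def B_def N_def a0_def b0_def c_def C1_def C2_def)
  have dL: "dHS (HS_u u01 \<mu>01 t) (HS_mu u01 \<mu>01 t) (HS_u u02 \<mu>02 t) (HS_mu u02 \<mu>02 t)
      = esssup N (\<lambda>s. ereal (ta s)) + enn2ereal (\<integral>\<^sup>+ s\<in>{0..1}. ennreal (tb s) \<partial>lborel) + ereal c"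
    by (simp add: dHS_def N_def ta_def tb_def c_def CT1 CT2)
  have aeE: "AE s in N. ereal (a0 s) \<le> E" unfolding E_def by (rule esssup_AE)
  have E0: "0 \<le> E"
  proof (rule ccontr)
    assume nE: "\<not> 0 \<le> E"
    have "AE s in N. False" using aeE
    proof eventually_elim
      case (elim s)
      have "0 \<le> ereal (a0 s)" by (simp add: a0_def)
      then have "0 \<le> E" using elim by (rule order_trans)
      with nE show False by simp
    qed
    then have "ae_filter N = bot" by (simp add: trivial_limit_def)
    then have "emeasure N (space N) = 0" by (simp add: ae_filter_eq_bot_iff)
    with emN show False by simp
  qed
  have c0: "0 \<le> c" by (simp add: c_def)
  have coef: "0 < 1 + t + t\<^sup>2 / 8" using t by (simp add: add_pos_nonneg)
  show ?thesis
  proof (cases "E = \<infinity> \<or> B = \<infinity>")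
    case True
    have "E + enn2ereal B + ereal c = \<infinity>"
      using True E0 by auto
    then have inf: "ereal (1 + t + t\<^sup>2 / 8) * dHS u01 \<mu>01 u02 \<mu>02 = \<infinity>"
      using coef by (simp add: dR)
    have "dHS (HS_u u01 \<mu>01 t) (HS_mu u01 \<mu>01 t) (HS_u u02 \<mu>02 t) (HS_mu u02 \<mu>02 t) \<le> \<infinity>"
      by simp
    also have "\<infinity> = ereal (1 + t + t\<^sup>2 / 8) * dHS u01 \<mu>01 u02 \<mu>02" using inf by (rule sym)
    finally show ?thesis .
  next
    case False
    then obtain e where e: "E = ereal e" using E0 by (cases E) auto
    have e0: "0 \<le> e" using E0 e by simp
    have Bfin: "B < top" using False by (simp add: less_top)
    define bv where "bv = enn2real B"
    have Bv: "B = ennreal bv" "0 \<le> bv" using Bfin by (simp_all add: bv_def)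
    have L1: "esssup N (\<lambda>s. ereal (ta s)) \<le> ereal (e + t / 4 * c)"
    proof (rule esssup_I)
      show "(\<lambda>s. ereal (ta s)) \<in> borel_measurable N"
        unfolding N_def by (rule meas_N[OF mta]) simp
      show "AE s in N. ereal (ta s) \<le> ereal (e + t / 4 * c)"
        using AEN aeE
      proof eventually_elim
        case (elim s)
        then have "a0 s \<le> e" using e by simp
        with pa[OF elim(1)] show ?case by simp
      qed
    qed
    have aeL: "AE s in lborel. s \<in> {0..1} \<longrightarrow> s \<in> {0<..<1} \<and> a0 s \<le> e"
    proof -
      have "AE s in N. s \<in> {0<..<1} \<and> a0 s \<le> e"
        using AEN aeE by eventually_elim (simp add: e)
      then show ?thesis unfolding N_def AE_restrict_space_iff[OF setsN] .
    qed
    define K where "K = t * e + t\<^sup>2 / 8 * c"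
    have K0: "0 \<le> K" using t e0 c0 by (simp add: K_def)
    have mb0': "(\<lambda>s. ennreal (if s \<in> {0<..<1} then b0 s else 0)) \<in> borel_measurable lborel"
      using mb0 by simp
    have "(\<integral>\<^sup>+ s\<in>{0..1}. ennreal (tb s) \<partial>lborel) \<le>
          (\<integral>\<^sup>+ s. (ennreal (if s \<in> {0<..<1} then b0 s else 0) + ennreal K * indicator {0..1} s) \<partial>lborel)"
    proof (rule nn_integral_mono_AE)
      show "AE s in lborel. ennreal (tb s) * indicator {0..1} s \<le>
            ennreal (if s \<in> {0<..<1} then b0 s else 0) + ennreal K * indicator {0..1} s"
        using aeL
      proof eventually_elim
        case (elim s)
        show ?case
        proof (cases "s \<in> {0..1}")
          case True
          with elim have s: "s \<in> {0<..<1}" "a0 s \<le> e" by auto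
          have "t * a0 s \<le> t * e" using s(2) t by (rule mult_left_mono)
          then have "tb s \<le> b0 s + K" using pb[OF s(1)] unfolding K_def by linarith
          then have "ennreal (tb s) \<le> ennreal (b0 s + K)" by (rule ennreal_leI)
          then show ?thesis using s True K0 by (simp add: ennreal_plus b0_def)
        next
          case False then show ?thesis by simp
        qed
      qed
    qed
    also have "\<dots> = (\<integral>\<^sup>+ s. ennreal (if s \<in> {0<..<1} then b0 s else 0) \<partial>lborel) + ennreal K * emeasure lborel {0..1::real}"
      using mb0' by (subst nn_integral_add) (auto simp: nn_integral_cmult_indicator)
    also have "(\<integral>\<^sup>+ s. ennreal (if s \<in> {0<..<1} then b0 s else 0) \<partial>lborel) = B"
      unfolding B_def
      by (rule nn_integral_cong_AE)
         (use AE_lborel_singleton[of 0] AE_lborel_singleton[of 1] in eventually_elim, auto split: split_indicator)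
    finally have L2: "(\<integral>\<^sup>+ s\<in>{0..1}. ennreal (tb s) \<partial>lborel) \<le> ennreal (bv + K)"
      using Bv K0 by (simp add: ennreal_plus)
    have L2': "enn2ereal (\<integral>\<^sup>+ s\<in>{0..1}. ennreal (tb s) \<partial>lborel) \<le> ereal (bv + K)"
    proof -
      have "enn2ereal (\<integral>\<^sup>+ s\<in>{0..1}. ennreal (tb s) \<partial>lborel) \<le> enn2ereal (ennreal (bv + K))"
        using L2 unfolding less_eq_ennreal.rep_eq .
      also have "enn2ereal (ennreal (bv + K)) = ereal (bv + K)"
        using Bv K0 by (intro enn2ereal_ennreal) simp
      finally show ?thesis .
    qed
    have "dHS (HS_u u01 \<mu>01 t) (HS_mu u01 \<mu>01 t) (HS_u u02 \<mu>02 t) (HS_mu u02 \<mu>02 t)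
          \<le> ereal (e + t / 4 * c) + ereal (bv + K) + ereal c"
      unfolding dL by (intro add_mono L1 L2' order_refl)
    also have "\<dots> \<le> ereal ((1 + t + t\<^sup>2 / 8) * (e + bv + c))"
      using final_alg[OF e0 Bv(2) c0 t] by (simp add: K_def)
    also have "\<dots> = ereal (1 + t + t\<^sup>2 / 8) * dHS u01 \<mu>01 u02 \<mu>02"
      by (simp add: dR e Bv)
    finally show ?thesis .
  qed
qed


end
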